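(* Let $N\ge 64$ be an integer and let $\mathbb{D}_{0.95}$ be the disk of radius $0.95$ centered at the origin. Then for all $x\in\mathbb{D}_{0.95}$ and $l=1,2,3,4$, \[ \left|\frac{V_l\left(f_N^{-1}(x)^N\right)c_N}{f_N'(f_N^{-1}(x))\,f_N^{-1}(x)}\right|\le C_{V,l}, \] with $C_{V,1} = 0.1$, $C_{V,2} = 0.05$, $C_{V,3}=0.08$, $C_{V,4}=1$.
   Context: Let $\lambda = j_{0,1}^2$ ($j_{0,1}$ the first positive zero of $J_0$) and $\zeta$ the Riemann zeta function. Let $c_N = \sqrt{\Gamma(1-\frac1N)^2\Gamma(1+\frac2N)/(\Gamma(1+\frac1N)^2\Gamma(1-\frac2N))}$ and let $f_N(z) = c_N\int_0^z (1-\zeta^N)^{-2/N}d\zeta$ be the Schwarz–Christoffel map, a biholomorphism of the unit disk onto the regular $N$-gon $\mathcal{P}_N$ of area $\pi$ centered at the origin, with inverse $f_N^{-1}$. For positive integers $m_1,\dots,m_k$ and $|z|<1$ the multiple polylogarithm is $\mathrm{Li}_{m_1,\dots,m_k}(z) = \sum_{0<n_1<\dots<n_k} \frac{z^{n_k}}{n_1^{m_1}\cdots n_k^{m_k}}$ (so $\mathrm{Li}_s$ is the ordinary polylogarithm). Define $V_1 = 2\mathrm{Li}_1$, $V_2 = (\frac{\lambda}{2}-2)\mathrm{Li}_2+4\mathrm{Li}_{1,1}$, $V_3 = (\frac{\lambda^2}{16}-\lambda+2)\mathrm{Li}_3+(3\lambda-12)\mathrm{Li}_{1,2}+(\lambda-4)\mathrm{Li}_{2,1}+8\mathrm{Li}_{1,1,1}$,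 $V_4 = (\frac{\lambda^3}{192}-\frac{\lambda^2}{8}-\frac{\lambda}{2}-2)\mathrm{Li}_4+(\frac{\lambda^2}{8}-2\lambda+4)\mathrm{Li}_{3,1}+(\frac{\lambda^2}{4}-4\lambda+12)\mathrm{Li}_{2,2}+(\frac{5\lambda^2}{8}-8\lambda+28)\mathrm{Li}_{1,3}+(2\lambda-8)\mathrm{Li}_{2,1,1}+(6\lambda-24)\mathrm{Li}_{1,2,1}+(14\lambda-56)\mathrm{Li}_{1,1,2}+16\mathrm{Li}_{1,1,1,1}+2\lambda\zeta(3)\mathrm{Li}_1$. At $x=0$ (where $f_N^{-1}(0)=0$) the quotient is understood as its continuous extension. *)

theory Defs
  imports "HOL-Complex_Analysis.Complex_Analysis"
begin

definition besselJ0 :: "real \<Rightarrow> real" where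
  "besselJ0 x = (\<Sum>k. (-1)^k / (fact k)^2 * (x/2)^(2*k))"

definition j01 :: real where
  "j01 = Inf {x. x > 0 \<and> besselJ0 x = 0}"

definition lam :: real where
  "lam = j01^2"

definition zeta3 :: real where
  "zeta3 = (\<Sum>n. 1 / (real (Suc n))^3)"

definition cN :: "nat \<Rightarrow> real" where
  "cN N = sqrt (Gamma (1 - 1/real N)^2 * Gamma (1 + 2/real N)
              / (Gamma (1 + 1/real N)^2 * Gamma (1 - 2/real N)))"

definition fN :: "nat \<Rightarrow> complex \<Rightarrow> complex" where
  "fN N z = complex_of_real (cN N) *
     contour_integral (linepath 0 z) (\<lambda>w. (1 - w^N) powr (- (2 / of_nat N :: complex)))"

definition fN_inv :: "nat \<Rightarrow> complex \<Rightarrow> complex" where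
  "fN_inv N = inv_into (ball 0 1) (fN N)"

text \<open>Nested harmonic sums. H [m_{k-1}, ..., m_1] n =
  sum over 0 < n_1 < ... < n_{k-1} < n of 1/(n_1^m_1 ... n_{k-1}^m_{k-1}) (list given in reverse order).\<close>
fun Hs :: "nat list \<Rightarrow> nat \<Rightarrow> complex" where
  "Hs [] n = 1"
| "Hs (m # ms) n = (\<Sum>j\<in>{1..<n}. Hs ms j / of_nat j ^ m)"

text \<open>Multiple polylogarithm Li_{m_1,...,m_k}(z), list [m_1,...,m_k].\<close>
definition mpolylog :: "nat list \<Rightarrow> complex \<Rightarrow> complex" where
  "mpolylog ms z = (case rev ms of
      [] \<Rightarrow> 0
    | (m # rs) \<Rightarrow> (\<Sum>n. (if n = 0 then 0 else Hs rs n * z^n / of_nat n ^ m)))"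

definition V :: "nat \<Rightarrow> complex \<Rightarrow> complex" where
  "V l z = (let L = complex_of_real lam; Li = (\<lambda>ms. mpolylog ms z) in
     if l = 1 then 2 * Li [1]
     else if l = 2 then (L/2 - 2) * Li [2] + 4 * Li [1,1]
     else if l = 3 then (L^2/16 - L + 2) * Li [3] + (3*L - 12) * Li [1,2]
                        + (L - 4) * Li [2,1] + 8 * Li [1,1,1]
     else if l = 4 then (L^3/192 - L^2/8 - L/2 - 2) * Li [4] + (L^2/8 - 2*L + 4) * Li [3,1]
                        + (L^2/4 - 4*L + 12) * Li [2,2] + (5*L^2/8 - 8*L + 28) * Li [1,3]
                        + (2*L - 8) * Li [2,1,1] + (6*L - 24) * Li [1,2,1]
                        + (14*L - 56) * Li [1,1,2] + 16 * Li [1,1,1,1]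
                        + 2 * L * complex_of_real zeta3 * Li [1]
     else 0)"

definition CV :: "nat \<Rightarrow> real" where
  "CV l = (if l = 1 then 0.1 else if l = 2 then 0.05 else if l = 3 then 0.08 else 1)"

definition Qt :: "nat \<Rightarrow> nat \<Rightarrow> complex \<Rightarrow> complex" where
  "Qt N l x = (let w = fN_inv N x in
     V l (w ^ N) * complex_of_real (cN N) / (deriv (fN N) w * w))"

end

theory Submission
  imports Defs
begin


lemma J0_alt: "besselJ0 x = (\<Sum>k. (-1)^k / (fact k)^2 * (x^2/4)^k)"
proof -
  have "\<And>k. (x/2)^(2*k) = (x^2/4)^k"
    by (simp add: power_mult power_divide)
  then show ?thesis unfolding besselJ0_def by simp
qed

lemma J0coef_summable: "summable (\<lambda>k. (-1)^k / (fact k)^2 * (y::real)^k)"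
proof (rule summable_comparison_test'[OF summable_exp[of "\<bar>y\<bar>"]])
  fix n :: nat
  have f1: "(1::real) \<le> fact n" by simp
  have "norm ((-1)^n / (fact n)^2 * y^n) = \<bar>y\<bar>^n / (fact n)^2"
    by (simp add: abs_mult power_abs)
  also have "\<dots> \<le> \<bar>y\<bar>^n / fact n"
    by (rule divide_left_mono) (use f1 in \<open>auto simp: power2_eq_square\<close>)
  finally show "norm ((-1)^n / (fact n)^2 * y^n) \<le> inverse (fact n) * \<bar>y\<bar>^n"
    by (simp add: divide_inverse mult.commute)
qed

lemma J0abs_summable: "summable (\<lambda>k. \<bar>y::real\<bar>^k / (fact k)^2)"
proof (rule summable_comparison_test'[OF summable_exp[of "\<bar>y\<bar>"]])
  fix n :: nat
  have f1: "(1::real) \<le> fact n" by simp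
  have "norm (\<bar>y\<bar>^n / (fact n)^2) = \<bar>y\<bar>^n / (fact n)^2"
    by (simp add: abs_mult power_abs)
  also have "\<dots> \<le> \<bar>y\<bar>^n / fact n"
    by (rule divide_left_mono) (use f1 in \<open>auto simp: power2_eq_square\<close>)
  finally show "norm (\<bar>y\<bar>^n / (fact n)^2) \<le> inverse (fact n) * \<bar>y\<bar>^n"
    by (simp add: divide_inverse mult.commute)
qed


lemma J0g_bounds:
  fixes y :: real
  assumes y0: "0 \<le> y" and y4: "y \<le> 4"
  shows "1 - y + y^2/4 - y^3/36 \<le> (\<Sum>k. (-1)^k / (fact k)^2 * y^k)"
    and "(\<Sum>k. (-1)^k / (fact k)^2 * y^k) \<le> 1 - y + y^2/4 - y^3/36 + y^4/576"
proof -
  define c where "c k = (-1)^k / (fact k)^2 * y^k" for k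
  define a where "a k = y^(Suc k) / (fact (Suc k))^2" for k
  have sc: "summable c" unfolding c_def by (rule J0coef_summable)
  have ca: "c (Suc k) = - ((-1)^k * a k)" for k
    by (simp add: c_def a_def)
  have sS: "summable (\<lambda>k. c (Suc k))" using summable_Suc_iff[of c] sc by simp
  have ce: "(\<lambda>k. c (Suc k)) = (\<lambda>k. - ((-1)^k * a k))" using ca by auto
  have sA: "summable (\<lambda>k. (-1)^k * a k)" using sS unfolding ce by (simp add: summable_minus_iff)
  have "(\<Sum>k. c (Suc k)) = suminf c - c 0" by (rule suminf_split_head[OF sc])
  moreover have "(\<Sum>k. c (Suc k)) = - (\<Sum>k. (-1)^k * a k)" unfolding ce by (rule suminf_minus[OF sA])
  moreover have "c 0 = 1" by (simp add: c_def)
  ultimately have S: "(\<Sum>k. (-1)^k * a k) = 1 - suminf c" by simp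
  have apos: "0 \<le> a k" for k unfolding a_def using y0 by simp
  have sa: "summable a"
  proof -
    have "summable (\<lambda>k. \<bar>y\<bar>^(Suc k) / (fact (Suc k))^2)"
      using summable_Suc_iff[of "\<lambda>k. \<bar>y\<bar>^k / (fact k)^2"] J0abs_summable[of y] by simp
    moreover have "(\<lambda>k. \<bar>y\<bar>^(Suc k) / (fact (Suc k))^2) = a"
      by (rule ext) (simp only: a_def abs_of_nonneg[OF y0])
    ultimately show ?thesis by simp
  qed
  have a0: "a \<longlonglongrightarrow> 0" using summable_LIMSEQ_zero[OF sa] .
  have amono: "a (Suc k) \<le> a k" for k
  proof -
    have f: "fact (Suc (Suc k)) = real (Suc (Suc k)) * fact (Suc k)" by simp
    have "(4::real) \<le> (real (Suc (Suc k)))^2"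
    proof -
      have "(2::real) \<le> real (Suc (Suc k))" by simp
      then have "2^2 \<le> (real (Suc (Suc k)))^2" by (rule power_mono) simp
      then show ?thesis by simp
    qed
    then have yk: "y \<le> (real (Suc (Suc k)))^2" using y4 by simp
    have fp: "0 < (fact (Suc k)::real)" by simp
    have "a (Suc k) = (y / (real (Suc (Suc k)))^2) * a k"
    proof -
      define F where "F = (fact (Suc k) :: real)"
      define m where "m = real (Suc (Suc k))"
      have Fp: "F > 0" "m > 0" unfolding F_def m_def by auto
      have "a (Suc k) = y * y^(Suc k) / (m^2 * F^2)"
        unfolding a_def f F_def[symmetric] m_def[symmetric] power_mult_distrib by simp
      also have "\<dots> = (y / m^2) * (y^(Suc k) / F^2)" using Fp by (simp add: field_simps)
      finally show ?thesis unfolding a_def F_def m_def .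
    qed
    also have "\<dots> \<le> 1 * a k"
      by (rule mult_right_mono) (use yk apos in \<open>auto simp: divide_le_eq\<close>)
    finally show ?thesis by simp
  qed
  note L = summable_Leibniz'[OF a0 apos amono]
  have "(\<Sum>i<2*1. (-1)^i*a i) \<le> (\<Sum>i. (-1)^i*a i)" by (rule L(2))
  moreover have "(\<Sum>i. (-1)^i*a i) \<le> (\<Sum>i<2*1+1. (-1)^i*a i)" by (rule L(4))
  moreover have "(\<Sum>i<2*2. (-1)^i*a i) \<le> (\<Sum>i. (-1)^i*a i)" by (rule L(2))
  moreover have "(\<Sum>i<2*1+1. (-1)^i*a i) = y - y^2/4 + y^3/36"
    by (simp add: a_def eval_nat_numeral fact_numeral)
  moreover have "(\<Sum>i<2*2. (-1)^i*a i) = y - y^2/4 + y^3/36 - y^4/576"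
    by (simp add: a_def eval_nat_numeral fact_numeral)
  ultimately show "1 - y + y^2/4 - y^3/36 \<le> (\<Sum>k. (-1)^k / (fact k)^2 * y^k)"
    and "(\<Sum>k. (-1)^k / (fact k)^2 * y^k) \<le> 1 - y + y^2/4 - y^3/36 + y^4/576"
    using S unfolding c_def by linarith+
qed


definition J0g :: "real \<Rightarrow> real" where "J0g y = (\<Sum>k. (-1)^k / (fact k)^2 * y^k)"

lemma J0g_cont: "isCont J0g y"
  unfolding J0g_def
  by (rule isCont_powser[of _ "\<bar>y\<bar> + 1"]) (use J0coef_summable in \<open>auto simp: mult.assoc\<close>)

lemma besselJ0_cont: "continuous_on S besselJ0"
proof -
  have e: "besselJ0 = J0g \<circ> (\<lambda>x. x^2/4)"
    by (rule ext) (simp add: J0_alt J0g_def)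
  show ?thesis unfolding e
    by (intro continuous_at_imp_continuous_on ballI continuous_at_compose J0g_cont) (auto intro!: continuous_intros)
qed

lemma J0_pos: assumes "0 \<le> x" "x \<le> 2.12" shows "0 < besselJ0 x"
proof -
  define y where "y = x^2/4"
  have y0: "0 \<le> y" unfolding y_def by simp
  have "x*x \<le> 2.12*2.12" by (rule mult_mono) (use assms in auto)
  then have y1: "y \<le> 1.1236" unfolding y_def by (simp add: power2_eq_square)
  have "1 - y + y^2/4 - y^3/36 \<le> besselJ0 x"
    using J0g_bounds(1)[OF y0] y1 by (simp add: J0_alt y_def)
  moreover have "0 < 1 - y + y^2/4 - y^3/36"
  proof -
    have h1: "0.4382 \<le> 1 - y/2" using y1 by simp
    have "0.4382^2 \<le> (1 - y/2)^2" by (rule power_mono[OF h1]) simp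
    moreover have "y^3 \<le> 1.1236^3" by (rule power_mono) (use y0 y1 in auto)
    ultimately show ?thesis by (simp add: power2_eq_square power3_eq_cube algebra_simps)
  qed
  ultimately show ?thesis by linarith
qed

lemma J0_neg: "besselJ0 2.41 < 0"
proof -
  have e: "(2.41::real)^2/4 = 1.452025" by (simp add: power2_eq_square)
  have b: "besselJ0 2.41 = J0g 1.452025"
    unfolding J0_alt J0g_def e ..
  have "J0g 1.452025 \<le> 1 - 1.452025 + 1.452025^2/4 - 1.452025^3/36 + 1.452025^4/576"
    using J0g_bounds(2)[of "1.452025"] unfolding J0g_def by simp
  also have "\<dots> < 0" by (simp add: power_divide)
  finally show ?thesis unfolding b .
qed

lemma j01_bounds: "2.12 \<le> j01" "j01 \<le> 2.41"
proof -
  define S where "S = {x. x > 0 \<and> besselJ0 x = 0}"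
  have "besselJ0 0 = 1" using powser_zero[of "\<lambda>k. (-1)^k / (fact k)^2 :: real"]
    by (simp add: J0_alt)
  then obtain z where z: "0 \<le> z" "z \<le> 2.41" "besselJ0 z = 0"
    using IVT2'[of besselJ0 "2.41" 0 0] J0_neg besselJ0_cont by force
  then have zS: "z \<in> S" unfolding S_def using J0_pos[of z] by (cases "z \<le> 2.12") auto
  have bdd: "bdd_below S" unfolding S_def by (rule bdd_belowI[of _ 0]) auto
  have "j01 \<le> z" unfolding j01_def S_def[symmetric] by (rule cInf_lower[OF zS bdd])
  then show "j01 \<le> 2.41" using z by simp
  have "2.12 \<le> Inf S"
  proof (rule cInf_greatest)
    show "S \<noteq> {}" using zS by blast
    fix x assume "x \<in> S"
    then show "2.12 \<le> x" unfolding S_def using J0_pos[of x] by force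
  qed
  then show "2.12 \<le> j01" unfolding j01_def S_def .
qed

lemma lam_bounds: "4.4944 \<le> lam" "lam \<le> 5.8081"
proof -
  have "2.12*2.12 \<le> j01*j01" by (rule mult_mono) (use j01_bounds in auto)
  then show "4.4944 \<le> lam" unfolding lam_def by (simp add: power2_eq_square)
  have "j01*j01 \<le> 2.41*2.41" by (rule mult_mono) (use j01_bounds in auto)
  then show "lam \<le> 5.8081" unfolding lam_def by (simp add: power2_eq_square)
qed


lemma Gamma_reflection_real:
  fixes x :: real
  shows "Gamma x * Gamma (1 - x) = pi / sin (pi * x)"
proof -
  have "complex_of_real (Gamma x * Gamma (1 - x)) = of_real (pi / sin (pi * x))"
    using Gamma_reflection_complex[of "of_real x"]
    by (simp add: Gamma_complex_of_real[symmetric] sin_of_real[symmetric])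
  then show ?thesis by (simp only: of_real_eq_iff)
qed

lemma cos_lower: "1 - t^2/2 \<le> cos (t::real)"
proof -
  have "cos t = 1 - 2 * sin (t/2)^2" using cos_double_sin[of "t/2"] by simp
  moreover have "sin (t/2)^2 \<le> (t/2)^2"
    using abs_sin_x_le_abs_x[of "t/2"] by (metis abs_le_square_iff)
  ultimately show ?thesis by (simp add: power_divide)
qed

lemma Gamma_one_minus:
  fixes e :: real
  assumes "0 < e" "e < 1"
  shows "Gamma (1 - e) = pi * e / (sin (pi * e) * Gamma (1 + e))"
proof -
  have g1: "Gamma (1 + e) = e * Gamma e"
    using Gamma_plus1[of e] assms by (simp add: add.commute nonpos_Ints_def)
      (metis add.commute assms(1) Gamma_plus1 nonpos_Ints_nonpos not_le)
  have s: "sin (pi * e) > 0" using assms by (intro sin_gt_zero) auto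
  have Ge: "Gamma e > 0" using assms by simp
  have "Gamma (1-e) = pi / (Gamma e * sin(pi*e))"
    using Gamma_reflection_real[of e] Ge s by (simp add: field_simps)
  also have "Gamma e = Gamma (1+e) / e" using g1 assms by simp
  finally show ?thesis using assms by (simp add: field_simps)
qed

lemma cN_lower:
  assumes N: "N \<ge> 64"
  shows "cN N \<ge> 0.9993"
proof -
  define e where "e = 1 / real N"
  have e0: "0 < e" and e1: "e \<le> 1/64" using N unfolding e_def by (auto simp: field_simps)
  define A where "A = Gamma (1 + e)"
  define B where "B = Gamma (1 + 2*e)"
  have A0: "A > 0" and B0: "B > 0" unfolding A_def B_def using e0 by auto
  have s1: "sin (pi * e) > 0" using e0 e1 pi_gt3 by (intro sin_gt_zero) auto
  have s2: "sin (pi * (2*e)) > 0" using e0 e1 pi_gt3 by (intro sin_gt_zero) auto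
  have G1: "Gamma (1 - e) = pi * e / (sin (pi * e) * A)"
    unfolding A_def by (rule Gamma_one_minus) (use e0 e1 in auto)
  have G2: "Gamma (1 - 2*e) = pi * (2*e) / (sin (pi * (2*e)) * B)"
    unfolding B_def by (rule Gamma_one_minus) (use e0 e1 in auto)
  have AB: "A^2 \<le> B"
  proof -
    have c: "convex_on {0<..} (ln \<circ> Gamma :: real \<Rightarrow> real)" by (rule log_convex_Gamma_real)
    have "(ln \<circ> Gamma) ((1 - 1/2) *\<^sub>R 1 + (1/2) *\<^sub>R (1 + 2*e)) \<le> (1 - 1/2) * (ln \<circ> Gamma) 1 + (1/2) * (ln \<circ> Gamma) (1 + 2*e)"
      by (rule convex_onD[OF c]) (use e0 in auto)
    moreover have "(1 - 1/2) *\<^sub>R 1 + (1/2) *\<^sub>R (1 + 2*e) = 1 + (e::real)" by (simp add: field_simps)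
    ultimately have "ln A \<le> ln B / 2" unfolding A_def B_def by simp
    then have "2 * ln A \<le> ln B" by simp
    then have "ln (A^2) \<le> ln B" using A0 by (simp add: ln_realpow)
    then show ?thesis using A0 B0 by simp
  qed
  have sin2: "sin (pi * (2*e)) = 2 * sin (pi*e) * cos (pi*e)"
    using sin_double[of "pi*e"] by (simp add: ac_simps)
  have e2: "2 / real N = 2 * e" unfolding e_def by simp
  have argpos: "0 \<le> Gamma (1 - e)^2 * Gamma (1 + 2*e) / ((Gamma (1 + e))^2 * Gamma (1 - 2*e))"
  proof -
    have p1: "0 < Gamma (1+e)" "0 < Gamma (1-2*e)" "0 < Gamma (1+2*e)" using e0 e1 by auto
    have "0 < (Gamma (1 + e))^2 * Gamma (1 - 2*e)" using p1 by simp
    moreover have "0 \<le> Gamma (1 - e)^2 * Gamma (1 + 2*e)" using p1 by simp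
    ultimately show ?thesis by (rule divide_nonneg_pos[rotated])
  qed
  have sq: "(cN N)^2 = pi * e * cos (pi * e) / sin (pi * e) * (B^2 / A^4)"
  proof -
    have "(cN N)^2 = Gamma (1 - e)^2 * Gamma (1 + 2*e) / ((Gamma (1 + e))^2 * Gamma (1 - 2*e))"
      unfolding cN_def e2 e_def[symmetric] by (rule real_sqrt_pow2[OF argpos])
    also have "\<dots> = Gamma (1 - e)^2 * B / (A^2 * Gamma (1 - 2*e))" unfolding A_def B_def ..
    also have "\<dots> = pi * e * cos (pi * e) / sin (pi * e) * (B^2 / A^4)"
      unfolding G1 G2 sin2 using A0 B0 s1 e0 pi_gt_zero
        by (simp add: field_simps power2_eq_square power4_eq_xxxx)
    finally show ?thesis .
  qed
  have t0: "0 < pi * e" using e0 by simp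
  have "pi * e \<le> 3.2 * (1/64)" by (rule mult_mono) (use pi_approx e1 e0 in auto)
  then have t1: "pi * e \<le> (1/20)" by simp
  have "cos (pi*e) \<le> pi * e * cos (pi * e) / sin (pi * e)"
  proof -
    have "sin (pi*e) \<le> pi*e" using sin_x_le_x t0 by simp
    moreover have "0 \<le> cos (pi*e)" using t1 t0 pi_gt3 by (intro cos_ge_zero) linarith+
    ultimately have "cos (pi*e) * sin (pi*e) \<le> cos (pi*e) * (pi*e)" by (intro mult_left_mono)
    then show ?thesis using s1 by (simp add: field_simps)
  qed
  moreover have "1 \<le> B^2 / A^4"
  proof -
    have "(A^2)^2 \<le> B^2" by (rule power_mono[OF AB]) (use A0 in simp)
    then show ?thesis using A0 by (simp add: field_simps flip: power_mult)
  qed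
  moreover have "0.99875 \<le> cos (pi*e)"
  proof -
    have "(pi*e)^2 \<le> 1/400" using power_mono[OF t1, of 2] t0 by (simp add: power_divide)
    then show ?thesis using cos_lower[of "pi*e"] by simp
  qed
  ultimately have "0.99875 * 1 \<le> pi * e * cos (pi * e) / sin (pi * e) * (B^2 / A^4)"
    by (intro mult_mono) (blast intro: order_trans, auto)
  then have "0.99875 \<le> (cN N)^2" unfolding sq by simp
  moreover have "0.9993^2 \<le> (0.99875::real)" by (simp add: power2_eq_square)
  ultimately have "0.9993^2 \<le> (cN N)^2" by linarith
  moreover have "0 \<le> cN N" unfolding cN_def e2 e_def[symmetric] using argpos by simp
  ultimately show ?thesis using power2_le_imp_le by blast
qed


definition Gf :: "nat \<Rightarrow> complex \<Rightarrow> complex" where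
  "Gf N w = (1 - w^N) powr (- (2 / of_nat N :: complex))"

lemma fN_alt: "fN N z = complex_of_real (cN N) * contour_integral (linepath 0 z) (Gf N)"
proof -
  have "Gf N = (\<lambda>w. (1 - w^N) powr (- (2 / of_nat N :: complex)))" by (rule ext) (simp add: Gf_def)
  then show ?thesis unfolding fN_def by simp
qed

lemma Re_one_minus_pos: "norm (u::complex) < 1 \<Longrightarrow> 0 < Re (1 - u)"
  using complex_Re_le_cmod[of u] by simp

lemma one_minus_pow_notin: 
  assumes "norm (w::complex) < 1" "N > 0"
  shows "1 - w^N \<notin> \<real>\<^sub>\<le>\<^sub>0"
proof -
  have "norm (w^N) < 1" using assms by (simp add: norm_power power_less_one_iff)
  then have "0 < Re (1 - w^N)" by (rule Re_one_minus_pos)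
  then show ?thesis
  proof (intro notI)
    assume p: "0 < Re (1 - w^N)" and "1 - w^N \<in> \<real>\<^sub>\<le>\<^sub>0"
    then obtain r where r: "1 - w^N = of_real r" "r \<le> 0" by (auto elim!: nonpos_Reals_cases)
    then have "Re (1 - w^N) = r" by simp
    with p r show False by simp
  qed
qed

lemma Gf_holo: assumes "N > 0" shows "Gf N holomorphic_on ball 0 1"
proof -
  have "(\<lambda>w. (1 - w^N) powr (- (2 / of_nat N :: complex))) holomorphic_on ball 0 1"
  proof (rule holomorphic_on_powr)
    show "(\<lambda>w. 1 - w^N) holomorphic_on ball 0 1" by (auto intro!: holomorphic_intros)
    show "(\<lambda>w. - (2 / of_nat N :: complex)) holomorphic_on ball 0 1" by (auto intro!: holomorphic_intros)
    fix x :: complex assume "x \<in> ball 0 1"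
    then show "1 - x^N \<notin> \<real>\<^sub>\<le>\<^sub>0" using one_minus_pow_notin[of x N] assms by simp
  qed
  then show ?thesis unfolding Gf_def[abs_def] .
qed

lemma fN_has_deriv:
  assumes N: "N > 0" and w: "w \<in> ball 0 1"
  shows "(fN N has_field_derivative (complex_of_real (cN N) * Gf N w)) (at w)"
proof -
  have hol: "Gf N holomorphic_on ball 0 1" by (rule Gf_holo[OF N])
  have cont: "continuous_on (ball 0 1) (Gf N)" using hol holomorphic_on_imp_continuous_on by blast
  have "((\<lambda>x. contour_integral (linepath 0 x) (Gf N)) has_field_derivative Gf N w) (at w)"
  proof (rule triangle_contour_integrals_starlike_primitive[OF cont])
    show "(0::complex) \<in> ball 0 1" "open (ball (0::complex) 1)" "w \<in> ball 0 1" using w by auto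
    show "closed_segment 0 y \<subseteq> ball 0 1" if "y \<in> ball 0 1" for y :: complex
      using that convex_ball[of "0::complex" 1] by (intro closed_segment_subset) auto
    fix b c assume bc: "closed_segment b c \<subseteq> ball (0::complex) 1"
    then have "b \<in> ball 0 1" "c \<in> ball 0 1" by auto
    then have "convex hull {0, b, c} \<subseteq> ball 0 1"
      by (intro hull_minimal) auto
    then have "Gf N holomorphic_on convex hull {0,b,c}" using hol holomorphic_on_subset by blast
    then have "(Gf N has_contour_integral 0) (linepath 0 b +++ linepath b c +++ linepath c 0)"
      by (rule Cauchy_theorem_triangle)
    then show "contour_integral (linepath 0 b) (Gf N) + contour_integral (linepath b c) (Gf N) +
                 contour_integral (linepath c 0) (Gf N) = 0"
      by (rule has_chain_integral_chain_integral3)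
  qed
  then show ?thesis unfolding fN_alt[abs_def]
    by (intro DERIV_cmult)
qed

lemma deriv_fN:
  assumes N: "N > 0" and w: "w \<in> ball 0 1"
  shows "deriv (fN N) w = complex_of_real (cN N) * Gf N w"
  by (rule DERIV_imp_deriv[OF fN_has_deriv[OF N w]])

lemma fN_cont: assumes N: "N > 0" shows "continuous_on (ball 0 1) (fN N)"
  by (intro continuous_at_imp_continuous_on ballI DERIV_isCont[OF fN_has_deriv[OF N]])

lemma fN_zero: "fN N 0 = 0"
  unfolding fN_def by simp


lemma one_minus_nz: "norm (u::complex) < 1 \<Longrightarrow> 1 - u \<noteq> 0"
  by auto

lemma P_exp: "norm (u::complex) < 1 \<Longrightarrow>
   (1-u) powr (-(complex_of_real a)) = exp (-(complex_of_real a) * Ln (1-u))"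
  using one_minus_nz[of u] by (simp add: powr_def)

lemma Ln_small: assumes "norm (u::complex) \<le> 1/2" shows "norm (Ln (1-u)) \<le> 2 * norm u"
proof -
  have "norm (Ln (1 + (-u)) - (-u)) \<le> norm (-u)^2 / (1 - norm (-u))"
    by (rule Ln_approx_linear) (use assms in simp)
  also have "\<dots> \<le> norm u"
  proof -
    have "norm u^2 \<le> norm u * (1 - norm u)" using assms
      by (simp add: power2_eq_square mult_left_mono)
    then show ?thesis using assms by (simp add: divide_le_eq)
  qed
  finally have "norm (Ln (1 - u) + u) \<le> norm u" by simp
  then show ?thesis using norm_triangle_ineq4[of "Ln (1-u) + u" u] by simp
qed

lemma Im_Ln_bound: assumes "norm (u::complex) < 1" shows "\<bar>Im (Ln (1-u))\<bar> \<le> pi * norm u"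
proof (cases "norm u \<le> 1/2")
  case True
  have "\<bar>Im (Ln (1-u))\<bar> \<le> norm (Ln (1-u))" by (rule abs_Im_le_cmod)
  also have "\<dots> \<le> 2 * norm u" by (rule Ln_small[OF True])
  also have "\<dots> \<le> pi * norm u" using pi_gt3 by (intro mult_right_mono) auto
  finally show ?thesis .
next
  case False
  have "0 < Re (1 - u)" using complex_Re_le_cmod[of u] assms by simp
  then have "\<bar>Im (Ln (1-u))\<bar> < pi/2" by (rule Re_Ln_pos_lt_imp)
  also have "pi/2 \<le> pi * norm u" using False by simp
  finally show ?thesis by simp
qed

lemma ln_norm_bound: assumes "norm (u::complex) < 1" shows "ln (norm (1-u)) \<le> norm u"
proof -
  have p: "0 < norm (1-u)" using one_minus_nz[OF assms] by simp
  have "norm (1-u) \<le> 1 + norm u" using norm_triangle_ineq4[of 1 u] by simp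
  then have "ln (norm (1-u)) \<le> ln (1 + norm u)" using p by (subst ln_le_cancel_iff) (auto intro: add_pos_nonneg)
  also have "\<dots> \<le> norm u" by (rule ln_add_one_self_le_self) simp
  finally show ?thesis .
qed

lemma P_norm_lower: assumes "0 \<le> a" "norm (u::complex) < 1"
  shows "exp (- a * norm u) \<le> norm ((1-u) powr (-(complex_of_real a)))"
proof -
  have "norm ((1-u) powr (-(complex_of_real a))) = exp (Re (-(complex_of_real a) * Ln (1-u)))"
    unfolding P_exp[OF assms(2)] by (rule norm_exp_eq_Re)
  also have "Re (-(complex_of_real a) * Ln (1-u)) = - a * ln (norm (1-u))"
    using one_minus_nz[OF assms(2)] by simp
  finally have e: "norm ((1-u) powr (-(complex_of_real a))) = exp (- a * ln (norm (1-u)))" .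
  have "a * ln (norm (1-u)) \<le> a * norm u" by (rule mult_left_mono[OF ln_norm_bound[OF assms(2)] assms(1)])
  then show ?thesis unfolding e by simp
qed

lemma P_re_lower: assumes a0: "0 < a" and a1: "a \<le> 1/32" and u: "norm (u::complex) < 1"
  shows "1 - 1.16 * a * norm u \<le> Re ((1-u) powr (-(complex_of_real a)))"
proof -
  define th where "th = Im (Ln (1-u))"
  define E where "E = exp (- a * ln (norm (1-u)))"
  have "Re ((1-u) powr (-(complex_of_real a))) = exp (Re (-(complex_of_real a) * Ln (1-u))) * cos (Im (-(complex_of_real a) * Ln (1-u)))"
    unfolding P_exp[OF u] by (rule Re_exp)
  also have "\<dots> = E * cos (a * th)"
    using one_minus_nz[OF u] unfolding E_def th_def by simp
  finally have R: "Re ((1-u) powr (-(complex_of_real a))) = E * cos (a * th)" .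
  have E1: "1 - a * norm u \<le> E"
  proof -
    have "a * ln (norm (1-u)) \<le> a * norm u" by (rule mult_left_mono[OF ln_norm_bound[OF u]]) (use a0 in simp)
    then have "exp (- (a * norm u)) \<le> E" unfolding E_def by simp
    moreover have "1 - a * norm u \<le> exp (- (a * norm u))" using exp_ge_add_one_self[of "- (a * norm u)"] by simp
    ultimately show ?thesis by linarith
  qed
  have th: "\<bar>th\<bar> \<le> pi * norm u" unfolding th_def by (rule Im_Ln_bound[OF u])
  have C1: "1 - 0.16 * a * norm u \<le> cos (a * th)"
  proof -
    have "1 - (a*th)^2/2 \<le> cos (a * th)" 
    proof -
      have "cos (a*th) = 1 - 2 * sin (a*th/2)^2" using cos_double_sin[of "a*th/2"] by simp
      moreover have "sin (a*th/2)^2 \<le> (a*th/2)^2"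
        using abs_sin_x_le_abs_x[of "a*th/2"] by (metis abs_le_square_iff)
      ultimately show ?thesis by (simp add: power_divide)
    qed
    moreover have "(a*th)^2 \<le> (a * (pi * norm u))^2"
    proof -
      have "\<bar>a*th\<bar> \<le> a * (pi * norm u)" using th a0 by (simp add: abs_mult mult_left_mono)
      then have "\<bar>a*th\<bar>^2 \<le> (a * (pi * norm u))^2" by (rule power_mono) simp
      then show ?thesis by simp
    qed
    moreover have "(a * (pi * norm u))^2 \<le> 0.32 * a * norm u"
    proof -
      have nu: "norm u * norm u \<le> norm u" by (rule mult_left_le) (use u in auto)
      have p3: "pi \<le> 3.15" using pi_approx(2) by simp
      have "pi * pi \<le> 3.15 * 3.15" by (rule mult_mono[OF p3 p3]) auto
      then have pi2: "pi * pi \<le> 9.93" by simp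
      have "(a * (pi * norm u))^2 = (a * (pi*pi)) * (a * (norm u * norm u))" by (simp add: power2_eq_square algebra_simps)
      also have "\<dots> \<le> (1/32 * 9.93) * (a * norm u)"
        by (intro mult_mono mult_left_mono nu) (use a0 a1 pi2 in auto)
      also have "\<dots> \<le> 0.32 * a * norm u" using a0 by simp
      finally show ?thesis .
    qed
    ultimately show ?thesis by simp
  qed
  have au: "a * norm u \<le> a * 1" by (rule mult_left_mono) (use u a0 in auto)
  have Cpos: "0 \<le> 1 - 0.16 * a * norm u" using au a1 by simp
  have Epos: "0 \<le> 1 - a * norm u" using au a1 by simp
  have "(1 - a * norm u) * (1 - 0.16 * a * norm u) \<le> E * cos (a * th)"
    by (intro mult_mono E1 C1 Cpos) (use Epos E1 in linarith)
  moreover have "1 - 1.16 * a * norm u \<le> (1 - a * norm u) * (1 - 0.16 * a * norm u)"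
  proof -
    have "0 \<le> (a * norm u) * (0.16 * a * norm u)" using a0 by simp
    then show ?thesis by (simp add: algebra_simps)
  qed
  ultimately show ?thesis unfolding R by linarith
qed

lemma P_close: assumes a0: "0 \<le> a" and a1: "a \<le> 1/32" and u: "norm (u::complex) \<le> 1/2"
  shows "norm ((1-u) powr (-(complex_of_real a)) - 1) \<le> 3 * a * norm u"
proof -
  have u1: "norm u < 1" using u by simp
  define v where "v = -(complex_of_real a) * Ln (1-u)"
  have nv: "norm v \<le> a * (2 * norm u)"
    unfolding v_def norm_mult using Ln_small[OF u] a0 by (simp add: mult_left_mono)
  also have "\<dots> \<le> 1/32 * (2 * (1/2))" by (rule mult_mono) (use a1 u in auto)
  also have "\<dots> \<le> 1/2" by simp
  finally have "norm (exp v - 1) \<le> 3/2 * norm v" by (rule norm_exp_bounds(2))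
  also have "\<dots> \<le> 3/2 * (a * (2 * norm u))" using nv by simp
  finally show ?thesis unfolding P_exp[OF u1] v_def[symmetric] by simp
qed


lemma Gf_P: "Gf N w = (1 - w^N) powr (-(complex_of_real (2 / real N)))"
  by (simp add: Gf_def)

lemma a_bounds: assumes "N \<ge> 64" shows "0 < 2 / real N" "2 / real N \<le> 1/32"
  using assms by (auto simp: field_simps)

lemma Gf_hasI:
  assumes N: "N > 0" and w: "w \<in> ball 0 1"
  shows "(Gf N has_contour_integral contour_integral (linepath 0 w) (Gf N)) (linepath 0 w)"
proof -
  have "closed_segment 0 w \<subseteq> ball 0 1"
    using w convex_ball[of "0::complex" 1] by (intro closed_segment_subset) auto
  then have "continuous_on (closed_segment 0 w) (Gf N)"
    using holomorphic_on_imp_continuous_on[OF Gf_holo[OF N]] continuous_on_subset by blast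
  then show ?thesis by (intro has_contour_integral_integral contour_integrable_continuous_linepath)
qed

lemma poly_integral:
  "((\<lambda>x::real. 1 - c * x^N) has_integral (1 - c / real (Suc N))) {0..1}"
proof -
  have "((\<lambda>x::real. 1 - c * x^N) has_integral ((\<lambda>x. x - c * x^(Suc N) / real (Suc N)) 1 - (\<lambda>x. x - c * x^(Suc N) / real (Suc N)) 0)) {0..1}"
  proof (rule fundamental_theorem_of_calculus)
    fix x :: real assume "x \<in> {0..1}"
    have "((\<lambda>x. x - c * x^(Suc N) / real (Suc N)) has_real_derivative (1 - c * (real (Suc N) * x^N) / real (Suc N))) (at x within {0..1})"
      by (intro derivative_eq_intros) auto
    then show "((\<lambda>x. x - c * x^(Suc N) / real (Suc N)) has_vector_derivative (1 - c * x^N)) (at x within {0..1})"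
      by (simp add: has_real_derivative_iff_has_vector_derivative[symmetric] del: of_nat_Suc)
  qed simp
  then show ?thesis by simp
qed

lemma fN_re_lower:
  assumes N: "N \<ge> 64" and w: "w \<in> ball 0 1"
  shows "norm w ^ 2 * (1 - 1.16 * (2 / real N) / real (Suc N)) \<le> Re (contour_integral (linepath 0 w) (Gf N) * cnj w)"
proof -
  define a where "a = 2 / real N"
  have a0: "0 < a" and a1: "a \<le> 1/32" unfolding a_def using a_bounds[OF N] by auto
  define I where "I = contour_integral (linepath 0 w) (Gf N)"
  have N0: "N > 0" using N by simp
  have hI: "((\<lambda>x. Gf N (linepath 0 w x) * (w - 0)) has_integral I) {0..1}"
    using Gf_hasI[OF N0 w] unfolding I_def has_contour_integral_linepath .
  then have "((\<lambda>x. Gf N (linepath 0 w x) * w * cnj w) has_integral (I * cnj w)) {0..1}"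
    by (intro has_integral_mult_left) simp
  then have h2: "((\<lambda>x. Re (Gf N (linepath 0 w x) * w * cnj w)) has_integral Re (I * cnj w)) {0..1}"
    by (rule has_integral_Re)
  have h3: "((\<lambda>x. norm w ^ 2 * (1 - 1.16 * a * x^N)) has_integral (norm w ^ 2 * (1 - 1.16 * a / real (Suc N)))) {0..1}"
    using has_integral_mult_right[OF poly_integral[of "1.16 * a" N], of "norm w ^ 2"] by simp
  have le: "norm w ^ 2 * (1 - 1.16 * a * x^N) \<le> Re (Gf N (linepath 0 w x) * w * cnj w)" if x: "x \<in> {0..1}" for x
  proof -
    have lx: "linepath 0 w x = complex_of_real x * w" by (simp add: linepath_def scaleR_conv_of_real)
    define u where "u = (complex_of_real x * w)^N"
    have nu: "norm u = x^N * norm w ^ N" unfolding u_def using x by (simp add: norm_mult norm_power power_mult_distrib)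
    have wN: "norm w ^ N \<le> 1" using w by (simp add: power_le_one)
    have xN: "0 \<le> x^N" "x^N \<le> 1" using x by (auto simp: power_le_one)
    have nu1: "norm u \<le> x^N" unfolding nu using mult_left_mono[OF wN xN(1)] by simp
    have "norm u < 1"
    proof -
      have "norm w ^ N < 1" using w N0 by (simp add: power_less_one_iff)
      then have "x^N * norm w ^ N < 1" using xN by (smt (verit) mult_left_le_one_le norm_ge_zero zero_le_power)
      then show ?thesis using nu by simp
    qed
    then have "1 - 1.16 * a * norm u \<le> Re (Gf N (linepath 0 w x))"
      using P_re_lower[OF a0 a1, of u] unfolding Gf_P lx u_def a_def by simp
    moreover have "1 - 1.16 * a * x^N \<le> 1 - 1.16 * a * norm u" using nu1 a0 by simp
    moreover have "Re (Gf N (linepath 0 w x) * w * cnj w) = norm w ^ 2 * Re (Gf N (linepath 0 w x))"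
    proof -
      have "w * cnj w = complex_of_real (norm w ^ 2)" using complex_norm_square[of w] by simp
      then show ?thesis by (simp add: mult.assoc)
    qed
    ultimately show ?thesis by (simp add: mult_left_mono)
  qed
  have "norm w ^ 2 * (1 - 1.16 * a / real (Suc N)) \<le> Re (I * cnj w)"
    by (rule has_integral_le[OF h3 h2 le])
  then show ?thesis unfolding I_def a_def .
qed


lemma eta_bound: assumes N: "N \<ge> 64" shows "1.16 * (2 / real N) / real (Suc N) \<le> 0.000558"
proof -
  have "2 / real N \<le> 1/32" using a_bounds[OF N] by simp
  moreover have "1 / real (Suc N) \<le> 1/65" using N by (simp add: field_simps)
  ultimately have "(2 / real N) * (1 / real (Suc N)) \<le> 1/32 * (1/65)"
    by (intro mult_mono) auto
  then show ?thesis by simp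
qed

lemma fN_lower:
  assumes N: "N \<ge> 64" and w: "w \<in> ball 0 1"
  shows "0.99874 * norm w \<le> norm (fN N w)"
proof (cases "w = 0")
  case True then show ?thesis by simp
next
  case False
  define I where "I = contour_integral (linepath 0 w) (Gf N)"
  have "norm w ^ 2 * (1 - 0.000558) \<le> norm w ^ 2 * (1 - 1.16 * (2 / real N) / real (Suc N))"
    using eta_bound[OF N] by (intro mult_left_mono) auto
  also have "\<dots> \<le> Re (I * cnj w)" unfolding I_def by (rule fN_re_lower[OF N w])
  also have "\<dots> \<le> norm (I * cnj w)" by (rule complex_Re_le_cmod)
  also have "\<dots> = norm I * norm w" by (simp add: norm_mult)
  finally have "norm w * (norm w * (1 - 0.000558)) \<le> norm w * norm I"
    by (simp add: power2_eq_square algebra_simps)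
  then have I1: "norm w * 0.999442 \<le> norm I" using False by simp
  have c: "0.9993 \<le> cN N" by (rule cN_lower[OF N])
  have "norm (fN N w) = cN N * norm I" unfolding fN_alt I_def[symmetric] norm_mult using c by simp
  moreover have "0.9993 * (norm w * 0.999442) \<le> cN N * norm I"
    by (intro mult_mono c I1) (use c in auto)
  moreover have "0.99874 * norm w \<le> 0.9993 * (norm w * 0.999442)" by simp
  ultimately show ?thesis by linarith
qed

lemma pow64_bound: "(0.96::real)^64 \<le> 0.08"
proof -
  have a: "(0.96::real)^8 \<le> 0.7214" by (simp add: power_divide)
  have "(0.96::real)^64 = ((0.96::real)^8)^8" by (simp flip: power_mult)
  also have "\<dots> \<le> 0.7214^8" by (rule power_mono[OF a]) simp
  also have "\<dots> \<le> 0.08" by (simp add: power_divide)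
  finally show ?thesis .
qed

lemma fN_close:
  assumes N: "N \<ge> 64" and w: "norm w \<le> 0.96"
  shows "norm (contour_integral (linepath 0 w) (Gf N) - w) \<le> 0.0075 * norm w"
proof -
  have N0: "N > 0" using N by simp
  have wb: "w \<in> ball 0 1" using w by simp
  have h: "((\<lambda>u. Gf N u - 1) has_contour_integral (contour_integral (linepath 0 w) (Gf N) - 1 * (w - 0))) (linepath 0 w)"
    by (intro has_contour_integral_diff Gf_hasI[OF N0 wb] has_contour_integral_const_linepath)
  have "norm (contour_integral (linepath 0 w) (Gf N) - 1 * (w - 0)) \<le> 0.0075 * norm (w - 0)"
  proof (rule has_contour_integral_bound_linepath[OF h])
    fix u assume "u \<in> closed_segment 0 w"
    then have nu: "norm u \<le> norm w" using segment_bound(1)[of u 0 w] by simp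
    then have nu96: "norm u \<le> 0.96" using w by simp
    have "norm (u^N) = norm u ^ N" by (simp add: norm_power)
    also have "\<dots> \<le> 0.96 ^ N" by (rule power_mono[OF nu96]) simp
    also have "\<dots> \<le> 0.96 ^ 64" by (rule power_decreasing[OF N]) auto
    also have "\<dots> \<le> 0.08" by (rule pow64_bound)
    finally have uN: "norm (u^N) \<le> 0.08" .
    have "norm (Gf N u - 1) \<le> 3 * (2 / real N) * norm (u^N)"
      unfolding Gf_P by (rule P_close) (use a_bounds[OF N] uN in auto)
    also have "\<dots> \<le> 3 * (1/32) * 0.08"
      by (intro mult_mono) (use a_bounds[OF N] uN in auto)
    also have "\<dots> = 0.0075" by simp
    finally show "norm (Gf N u - 1) \<le> 0.0075" .
  qed simp
  then show ?thesis by simp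
qed

lemma fN_surj:
  assumes N: "N \<ge> 64" and x: "norm x < 0.95"
  shows "x \<in> fN N ` ball 0 1"
proof -
  have N0: "N > 0" using N by simp
  have c: "0.9993 \<le> cN N" by (rule cN_lower[OF N])
  define c' where "c' = complex_of_real (cN N)"
  have c'0: "c' \<noteq> 0" unfolding c'_def using c by simp
  define g where "g w = w - (fN N w - x) / c'" for w
  have sub: "cball (0::complex) 0.96 \<subseteq> ball 0 1" by auto
  have cont: "continuous_on (cball 0 0.96) g"
    unfolding g_def using continuous_on_subset[OF fN_cont[OF N0] sub] c'0
    by (intro continuous_intros) auto
  have maps: "g \<in> cball 0 0.96 \<rightarrow> cball 0 0.96"
  proof
    fix w :: complex assume "w \<in> cball 0 0.96"
    then have w: "norm w \<le> 0.96" by simp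
    have "g w = x / c' - (contour_integral (linepath 0 w) (Gf N) - w)"
      unfolding g_def fN_alt c'_def[symmetric] using c'0 by (simp add: field_simps)
    then have "norm (g w) \<le> norm (x / c') + norm (contour_integral (linepath 0 w) (Gf N) - w)"
      by (simp add: norm_triangle_ineq4)
    also have "norm (x / c') \<le> 0.95 / 0.9993"
    proof -
      have "norm (x / c') = norm x / cN N" unfolding c'_def using c by (simp add: norm_divide)
      also have "\<dots> \<le> 0.95 / cN N" using x c by (intro divide_right_mono) auto
      also have "\<dots> \<le> 0.95 / 0.9993" using c by (intro divide_left_mono) auto
      finally show ?thesis .
    qed
    also have "norm (contour_integral (linepath 0 w) (Gf N) - w) \<le> 0.0075 * 0.96"
      using fN_close[OF N w] w by simp
    finally have "norm (g w) \<le> 0.95 / 0.9993 + 0.0075 * 0.96" by simp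
    also have "\<dots> \<le> 0.96" by simp
    finally show "g w \<in> cball 0 0.96" by simp
  qed
  obtain w where w: "w \<in> cball 0 0.96" "g w = w"
    by (rule brouwer_ball[OF _ cont maps]) auto
  then have "fN N w = x" unfolding g_def using c'0 by simp
  moreover have "w \<in> ball 0 1" using w sub by auto
  ultimately show ?thesis by force
qed


fun Hr :: "nat list \<Rightarrow> nat \<Rightarrow> real" where
  "Hr [] n = 1"
| "Hr (m # ms) n = (\<Sum>j\<in>{1..<n}. Hr ms j / real j ^ m)"

lemma Hs_Hr: "Hs rs n = complex_of_real (Hr rs n)"
  by (induction rs arbitrary: n) auto

lemma Hr_nonneg: "0 \<le> Hr rs n"
  by (induction rs arbitrary: n) (auto intro!: sum_nonneg divide_nonneg_nonneg)

lemma Hr_le: "Hr rs n \<le> real n ^ length rs"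
proof (induction rs arbitrary: n)
  case Nil then show ?case by simp
next
  case (Cons m ms)
  have "Hr (m # ms) n = (\<Sum>j\<in>{1..<n}. Hr ms j / real j ^ m)" by simp
  also have "\<dots> \<le> (\<Sum>j\<in>{1..<n}. real n ^ length ms)"
  proof (rule sum_mono)
    fix j assume j: "j \<in> {1..<n}"
    have "1 \<le> real j" using j by simp
    then have pw: "1 \<le> real j ^ m" by (rule one_le_power)
    have "Hr ms j / real j ^ m \<le> Hr ms j / 1"
      by (rule divide_left_mono[OF pw Hr_nonneg]) (use j in simp)
    then have "Hr ms j / real j ^ m \<le> Hr ms j" by simp
    also have "\<dots> \<le> real j ^ length ms" by (rule Cons.IH)
    also have "\<dots> \<le> real n ^ length ms" using j by (intro power_mono) auto
    finally show "Hr ms j / real j ^ m \<le> real n ^ length ms" .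
  qed
  also have "\<dots> = real (n - 1) * real n ^ length ms" by simp
  also have "\<dots> \<le> real n * real n ^ length ms" by (intro mult_right_mono) auto
  finally show ?case by simp
qed

lemma cube_le_pow3: "real n ^ 3 \<le> 3 ^ n"
proof (induction n)
  case 0 then show ?case by simp
next
  case (Suc n)
  show ?case
  proof (cases "n \<le> 2")
    case True
    then have "n = 0 \<or> n = 1 \<or> n = 2" by auto
    then show ?thesis by (auto simp: eval_nat_numeral)
  next
    case False
    then have n3: "3 \<le> real n" by simp
    have a: "3 * real n ^ 2 \<le> real n ^ 3"
    proof -
      have "3 * real n ^ 2 \<le> real n * real n ^ 2" by (intro mult_right_mono n3) simp
      then show ?thesis by (simp add: power2_eq_square power3_eq_cube)
    qed
    have b: "3 * real n + 1 \<le> real n ^ 3"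
    proof -
      have "3 * 3 \<le> real n * real n" using n3 by (intro mult_mono) auto
      then have c: "real n * 9 \<le> real n * (real n * real n)" by (intro mult_left_mono) auto
      have "3 * real n + 1 \<le> real n * (real n * real n)" using c n3 by linarith
      then show ?thesis by (simp add: power3_eq_cube mult.assoc)
    qed
    have "real (Suc n) ^ 3 = real n ^ 3 + 3 * real n ^ 2 + (3 * real n + 1)"
      by (simp add: power2_eq_square power3_eq_cube algebra_simps)
    also have "\<dots> \<le> 3 * real n ^ 3" using a b by simp
    also have "\<dots> \<le> 3 * 3 ^ n" using Suc.IH by simp
    finally show ?thesis by simp
  qed
qed

lemma Hr_le3: assumes "length rs \<le> 3" "n \<ge> 1" shows "Hr rs n \<le> 3 ^ n"
proof -
  have "Hr rs n \<le> real n ^ length rs" by (rule Hr_le)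
  also have "\<dots> \<le> real n ^ 3" using assms by (intro power_increasing) auto
  also have "\<dots> \<le> 3 ^ n" by (rule cube_le_pow3)
  finally show ?thesis .
qed


lemma mpolylog_bound:
  assumes ms: "rev ms = m # rs" and m: "m \<ge> 1" and len: "length rs \<le> 3"
    and z: "norm z \<le> s" and s: "s \<le> 0.1"
  shows "norm (mpolylog ms z) \<le> norm z * (Hr rs 1 / 1 ^ m + Hr rs 2 / 2 ^ m * s + Hr rs 3 / 3 ^ m * s^2
            + Hr rs 4 / 4 ^ m * s^3 + 243 * s^4 / (1 - 3 * s))"
proof -
  define t where "t n = (if n = 0 then 0 else Hs rs n * z^n / of_nat n ^ m)" for n
  have mp: "mpolylog ms z = suminf t" unfolding mpolylog_def ms t_def by simp
  have s0: "0 \<le> s" using z norm_ge_zero order_trans by blast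
  define q where "q = 3 * norm z"
  have q0: "0 \<le> q" and q1: "q \<le> 0.3" unfolding q_def using z s by auto
  have nt: "norm (t n) = Hr rs n / real n ^ m * norm z ^ n" if "n \<ge> 1" for n
    using that unfolding t_def by (simp add: Hs_Hr norm_mult norm_divide norm_power Hr_nonneg)
  have t0: "t 0 = 0" unfolding t_def by simp
  have ntq: "norm (t n) \<le> q ^ n" for n
  proof (cases "n = 0")
    case True then show ?thesis by (simp add: t0)
  next
    case False
    then have n1: "n \<ge> 1" by simp
    have "1 \<le> real n" using n1 by simp
    then have pw: "1 \<le> real n ^ m" by (rule one_le_power)
    have "norm (t n) = Hr rs n / real n ^ m * norm z ^ n" by (rule nt[OF n1])
    also have "\<dots> \<le> Hr rs n / 1 * norm z ^ n"
      by (intro mult_right_mono divide_left_mono pw Hr_nonneg) (use n1 in auto)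
    also have "\<dots> \<le> 3 ^ n * norm z ^ n"
      using Hr_le3[OF len n1] by (intro mult_right_mono) auto
    also have "\<dots> = q ^ n" unfolding q_def by (simp add: power_mult_distrib)
    finally show ?thesis .
  qed
  have sq: "summable (\<lambda>n. q ^ n)" using q0 q1 by (intro summable_geometric) auto
  have snt: "summable (\<lambda>n. norm (t n))"
    by (rule summable_comparison_test'[OF sq]) (use ntq in simp)
  have st: "summable t" using snt summable_norm_cancel by blast
  have split: "suminf t = (\<Sum>n. t (n + 5)) + (\<Sum>i<5. t i)"
    by (rule suminf_split_initial_segment[OF st])
  have snt5: "summable (\<lambda>n. norm (t (n + 5)))" using snt by (subst summable_iff_shift) 
  have sq5: "summable (\<lambda>n. q ^ (n + 5))" using sq by (subst summable_iff_shift)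
  have tail: "norm (\<Sum>n. t (n + 5)) \<le> q ^ 5 / (1 - q)"
  proof -
    have "norm (\<Sum>n. t (n + 5)) \<le> (\<Sum>n. norm (t (n + 5)))" by (rule summable_norm[OF snt5])
    also have "\<dots> \<le> (\<Sum>n. q ^ (n + 5))" by (rule suminf_le[OF _ snt5 sq5]) (rule ntq)
    also have "(\<Sum>n. q ^ (n + 5)) = q ^ 5 / (1 - q)"
    proof -
      have "(\<lambda>n. q^n) sums (1 / (1 - q))" using q0 q1 by (intro geometric_sums) auto
      then have "(\<lambda>n. q^5 * q^n) sums (q^5 * (1 / (1 - q)))" by (rule sums_mult)
      then show ?thesis by (simp add: power_add mult.commute sums_iff)
    qed
    finally show ?thesis .
  qed
  have head: "norm (\<Sum>i<5. t i) \<le> norm z * (Hr rs 1 / 1 ^ m + Hr rs 2 / 2 ^ m * s + Hr rs 3 / 3 ^ m * s^2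
            + Hr rs 4 / 4 ^ m * s^3)"
  proof -
    have "norm (\<Sum>i<5. t i) \<le> (\<Sum>i<5. norm (t i))" by (rule norm_sum)
    also have "(\<Sum>i<5. norm (t i)) = norm (t 1) + norm (t 2) + norm (t 3) + norm (t 4)"
      by (simp add: eval_nat_numeral t0)
    also have "\<dots> = Hr rs 1 / 1 ^ m * norm z + Hr rs 2 / 2 ^ m * norm z ^ 2 + Hr rs 3 / 3 ^ m * norm z ^ 3 + Hr rs 4 / 4 ^ m * norm z ^ 4"
      using nt[of 1] nt[of 2] nt[of 3] nt[of 4] by simp
    also have "\<dots> \<le> norm z * (Hr rs 1 / 1 ^ m + Hr rs 2 / 2 ^ m * s + Hr rs 3 / 3 ^ m * s^2
            + Hr rs 4 / 4 ^ m * s^3)"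
    proof -
      have c: "0 \<le> Hr rs k / real k ^ m" for k by (simp add: Hr_nonneg)
      have p2: "norm z ^ 2 \<le> norm z * s" using z by (simp add: power2_eq_square mult_left_mono)
      have p3: "norm z ^ 3 \<le> norm z * s^2"
      proof -
        have "norm z ^ 2 \<le> s ^ 2" using z by (intro power_mono) auto
        then show ?thesis by (simp add: power3_eq_cube power2_eq_square mult.assoc mult_left_mono)
      qed
      have p4: "norm z ^ 4 \<le> norm z * s^3"
      proof -
        have "norm z ^ 3 \<le> s ^ 3" using z by (intro power_mono) auto
        then have "norm z * norm z ^ 3 \<le> norm z * s ^ 3" by (intro mult_left_mono) auto
        then show ?thesis by (simp add: eval_nat_numeral)
      qed
      have "Hr rs 2 / 2 ^ m * norm z ^ 2 \<le> Hr rs 2 / 2 ^ m * (norm z * s)"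
        using c[of 2] p2 by (intro mult_left_mono) auto
      moreover have "Hr rs 3 / 3 ^ m * norm z ^ 3 \<le> Hr rs 3 / 3 ^ m * (norm z * s^2)"
        using c[of 3] p3 by (intro mult_left_mono) auto
      moreover have "Hr rs 4 / 4 ^ m * norm z ^ 4 \<le> Hr rs 4 / 4 ^ m * (norm z * s^3)"
        using c[of 4] p4 by (intro mult_left_mono) auto
      ultimately show ?thesis by (simp add: algebra_simps)
    qed
    finally show ?thesis .
  qed
  have tail2: "q ^ 5 / (1 - q) \<le> norm z * (243 * s^4 / (1 - 3 * s))"
  proof -
    have "q ^ 5 = norm z * (243 * norm z ^ 4)" unfolding q_def by (simp add: power_mult_distrib eval_nat_numeral)
    also have "\<dots> \<le> norm z * (243 * s ^ 4)"
      using z by (intro mult_left_mono power_mono) auto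
    finally have a: "q ^ 5 \<le> norm z * (243 * s ^ 4)" .
    have b: "1 - 3 * s \<le> 1 - q" unfolding q_def using z by simp
    have b0: "0 < 1 - 3 * s" using s by simp
    have "q ^ 5 / (1 - q) \<le> norm z * (243 * s ^ 4) / (1 - q)"
      using a q1 by (intro divide_right_mono) auto
    also have "\<dots> \<le> norm z * (243 * s ^ 4) / (1 - 3 * s)"
      using b b0 s0 by (intro divide_left_mono) auto
    finally show ?thesis by simp
  qed
  have "norm (mpolylog ms z) \<le> norm (\<Sum>n. t (n + 5)) + norm (\<Sum>i<5. t i)"
    unfolding mp split by (rule norm_triangle_ineq)
  also have "\<dots> \<le> norm z * (243 * s^4 / (1 - 3 * s)) + norm z * (Hr rs 1 / 1 ^ m + Hr rs 2 / 2 ^ m * s + Hr rs 3 / 3 ^ m * s^2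
            + Hr rs 4 / 4 ^ m * s^3)"
    using tail tail2 head by linarith
  finally show ?thesis by (simp add: algebra_simps)
qed

lemma mpolylog_bound1:
  assumes ms: "rev ms = m # rs" and m: "m \<ge> 1" and len: "length rs \<le> 3"
    and z: "norm z \<le> s" and s: "s \<le> 0.1"
  shows "norm (mpolylog ms z - complex_of_real (Hr rs 1) * z) \<le> norm z * (Hr rs 2 / 2 ^ m * s + Hr rs 3 / 3 ^ m * s^2
            + Hr rs 4 / 4 ^ m * s^3 + 243 * s^4 / (1 - 3 * s))"
proof -
  define t where "t n = (if n = 0 then 0 else Hs rs n * z^n / of_nat n ^ m)" for n
  have mp: "mpolylog ms z = suminf t" unfolding mpolylog_def ms t_def by simp
  have s0: "0 \<le> s" using z norm_ge_zero order_trans by blast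
  define q where "q = 3 * norm z"
  have q0: "0 \<le> q" and q1: "q \<le> 0.3" unfolding q_def using z s by auto
  have nt: "norm (t n) = Hr rs n / real n ^ m * norm z ^ n" if "n \<ge> 1" for n
    using that unfolding t_def by (simp add: Hs_Hr norm_mult norm_divide norm_power Hr_nonneg)
  have t0: "t 0 = 0" unfolding t_def by simp
  have ntq: "norm (t n) \<le> q ^ n" for n
  proof (cases "n = 0")
    case True then show ?thesis by (simp add: t0)
  next
    case False
    then have n1: "n \<ge> 1" by simp
    have "1 \<le> real n" using n1 by simp
    then have pw: "1 \<le> real n ^ m" by (rule one_le_power)
    have "norm (t n) = Hr rs n / real n ^ m * norm z ^ n" by (rule nt[OF n1])
    also have "\<dots> \<le> Hr rs n / 1 * norm z ^ n"
      by (intro mult_right_mono divide_left_mono pw Hr_nonneg) (use n1 in auto)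
    also have "\<dots> \<le> 3 ^ n * norm z ^ n"
      using Hr_le3[OF len n1] by (intro mult_right_mono) auto
    also have "\<dots> = q ^ n" unfolding q_def by (simp add: power_mult_distrib)
    finally show ?thesis .
  qed
  have sq: "summable (\<lambda>n. q ^ n)" using q0 q1 by (intro summable_geometric) auto
  have snt: "summable (\<lambda>n. norm (t n))"
    by (rule summable_comparison_test'[OF sq]) (use ntq in simp)
  have st: "summable t" using snt summable_norm_cancel by blast
  have split: "suminf t = (\<Sum>n. t (n + 5)) + (\<Sum>i<5. t i)"
    by (rule suminf_split_initial_segment[OF st])
  have snt5: "summable (\<lambda>n. norm (t (n + 5)))" using snt by (subst summable_iff_shift) 
  have sq5: "summable (\<lambda>n. q ^ (n + 5))" using sq by (subst summable_iff_shift)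
  have tail: "norm (\<Sum>n. t (n + 5)) \<le> q ^ 5 / (1 - q)"
  proof -
    have "norm (\<Sum>n. t (n + 5)) \<le> (\<Sum>n. norm (t (n + 5)))" by (rule summable_norm[OF snt5])
    also have "\<dots> \<le> (\<Sum>n. q ^ (n + 5))" by (rule suminf_le[OF _ snt5 sq5]) (rule ntq)
    also have "(\<Sum>n. q ^ (n + 5)) = q ^ 5 / (1 - q)"
    proof -
      have "(\<lambda>n. q^n) sums (1 / (1 - q))" using q0 q1 by (intro geometric_sums) auto
      then have "(\<lambda>n. q^5 * q^n) sums (q^5 * (1 / (1 - q)))" by (rule sums_mult)
      then show ?thesis by (simp add: power_add mult.commute sums_iff)
    qed
    finally show ?thesis .
  qed
  have t1: "t 1 = complex_of_real (Hr rs 1) * z" unfolding t_def by (simp add: Hs_Hr)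
  have head: "norm ((\<Sum>i<5. t i) - complex_of_real (Hr rs 1) * z) \<le> norm z * (Hr rs 2 / 2 ^ m * s + Hr rs 3 / 3 ^ m * s^2
            + Hr rs 4 / 4 ^ m * s^3)"
  proof -
    have "(\<Sum>i<5. t i) - complex_of_real (Hr rs 1) * z = t 2 + t 3 + t 4"
      by (simp add: eval_nat_numeral t0 t1[unfolded One_nat_def])
    then have "norm ((\<Sum>i<5. t i) - complex_of_real (Hr rs 1) * z) \<le> norm (t 2) + norm (t 3) + norm (t 4)"
      using norm_triangle_ineq[of "t 2 + t 3" "t 4"] norm_triangle_ineq[of "t 2" "t 3"] by simp
    also have "\<dots> = Hr rs 2 / 2 ^ m * norm z ^ 2 + Hr rs 3 / 3 ^ m * norm z ^ 3 + Hr rs 4 / 4 ^ m * norm z ^ 4"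
      using nt[of 2] nt[of 3] nt[of 4] by simp
    also have "\<dots> \<le> norm z * (Hr rs 2 / 2 ^ m * s + Hr rs 3 / 3 ^ m * s^2
            + Hr rs 4 / 4 ^ m * s^3)"
    proof -
      have c: "0 \<le> Hr rs k / real k ^ m" for k by (simp add: Hr_nonneg)
      have p2: "norm z ^ 2 \<le> norm z * s" using z by (simp add: power2_eq_square mult_left_mono)
      have p3: "norm z ^ 3 \<le> norm z * s^2"
      proof -
        have "norm z ^ 2 \<le> s ^ 2" using z by (intro power_mono) auto
        then show ?thesis by (simp add: power3_eq_cube power2_eq_square mult.assoc mult_left_mono)
      qed
      have p4: "norm z ^ 4 \<le> norm z * s^3"
      proof -
        have "norm z ^ 3 \<le> s ^ 3" using z by (intro power_mono) auto
        then have "norm z * norm z ^ 3 \<le> norm z * s ^ 3" by (intro mult_left_mono) auto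
        then show ?thesis by (simp add: eval_nat_numeral)
      qed
      have "Hr rs 2 / 2 ^ m * norm z ^ 2 \<le> Hr rs 2 / 2 ^ m * (norm z * s)"
        using c[of 2] p2 by (intro mult_left_mono) auto
      moreover have "Hr rs 3 / 3 ^ m * norm z ^ 3 \<le> Hr rs 3 / 3 ^ m * (norm z * s^2)"
        using c[of 3] p3 by (intro mult_left_mono) auto
      moreover have "Hr rs 4 / 4 ^ m * norm z ^ 4 \<le> Hr rs 4 / 4 ^ m * (norm z * s^3)"
        using c[of 4] p4 by (intro mult_left_mono) auto
      ultimately show ?thesis by (simp add: algebra_simps)
    qed
    finally show ?thesis .
  qed
  have tail2: "q ^ 5 / (1 - q) \<le> norm z * (243 * s^4 / (1 - 3 * s))"
  proof -
    have "q ^ 5 = norm z * (243 * norm z ^ 4)" unfolding q_def by (simp add: power_mult_distrib eval_nat_numeral)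
    also have "\<dots> \<le> norm z * (243 * s ^ 4)"
      using z by (intro mult_left_mono power_mono) auto
    finally have a: "q ^ 5 \<le> norm z * (243 * s ^ 4)" .
    have b: "1 - 3 * s \<le> 1 - q" unfolding q_def using z by simp
    have b0: "0 < 1 - 3 * s" using s by simp
    have "q ^ 5 / (1 - q) \<le> norm z * (243 * s ^ 4) / (1 - q)"
      using a q1 by (intro divide_right_mono) auto
    also have "\<dots> \<le> norm z * (243 * s ^ 4) / (1 - 3 * s)"
      using b b0 s0 by (intro divide_left_mono) auto
    finally show ?thesis by simp
  qed
  have "mpolylog ms z - complex_of_real (Hr rs 1) * z = (\<Sum>n. t (n + 5)) + ((\<Sum>i<5. t i) - complex_of_real (Hr rs 1) * z)"
    unfolding mp split by simp
  then have "norm (mpolylog ms z - complex_of_real (Hr rs 1) * z) \<le> norm (\<Sum>n. t (n + 5)) + norm ((\<Sum>i<5. t i) - complex_of_real (Hr rs 1) * z)"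
    by (simp only: norm_triangle_ineq)
  also have "\<dots> \<le> norm z * (243 * s^4 / (1 - 3 * s)) + norm z * (Hr rs 2 / 2 ^ m * s + Hr rs 3 / 3 ^ m * s^2
            + Hr rs 4 / 4 ^ m * s^3)"
    using tail tail2 head by linarith
  finally show ?thesis by (simp add: algebra_simps)
qed


lemma Hr_Suc: "Hr (m # ms) (Suc n) = Hr (m # ms) n + (if n = 0 then 0 else Hr ms n / real n ^ m)"
proof (cases "n = 0")
  case True then show ?thesis by simp
next
  case False
  then have "{1..<Suc n} = insert n {1..<n}" by auto
  then show ?thesis using False by simp
qed

lemma Li_gen:
  assumes "rev ms = m # rs" "m \<ge> 1" "length rs \<le> 3" "norm z \<le> 0.0408"
    "Hr rs 1 / 1 ^ m + Hr rs 2 / 2 ^ m * 0.0408 + Hr rs 3 / 3 ^ m * 0.0408^2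
            + Hr rs 4 / 4 ^ m * 0.0408^3 + 243 * 0.0408^4 / (1 - 3 * 0.0408) \<le> B"
  shows "norm (mpolylog ms z) \<le> norm z * B"
proof -
  have "norm (mpolylog ms z) \<le> norm z * (Hr rs 1 / 1 ^ m + Hr rs 2 / 2 ^ m * 0.0408 + Hr rs 3 / 3 ^ m * 0.0408^2
            + Hr rs 4 / 4 ^ m * 0.0408^3 + 243 * 0.0408^4 / (1 - 3 * 0.0408))"
    by (rule mpolylog_bound[OF assms(1-4)]) simp
  also have "\<dots> \<le> norm z * B" by (rule mult_left_mono[OF assms(5)]) simp
  finally show ?thesis .
qed

lemma Li_1: "norm z \<le> 0.0408 \<Longrightarrow> norm (mpolylog [1] z) \<le> norm z * 1.02175"
  by (rule Li_gen[where m=1 and rs="[]"]) (simp_all add: Hr_Suc eval_nat_numeral power_divide)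

lemma Li_2: "norm z \<le> 0.0408 \<Longrightarrow> norm (mpolylog [2] z) \<le> norm z * 1.01117"
  by (rule Li_gen[where m=2 and rs="[]"]) (simp_all add: Hr_Suc eval_nat_numeral power_divide)

lemma Li_3: "norm z \<le> 0.0408 \<Longrightarrow> norm (mpolylog [3] z) \<le> norm z * 1.00595"
  by (rule Li_gen[where m=3 and rs="[]"]) (simp_all add: Hr_Suc eval_nat_numeral power_divide)

lemma Li_4: "norm z \<le> 0.0408 \<Longrightarrow> norm (mpolylog [4] z) \<le> norm z * 1.00335"
  by (rule Li_gen[where m=4 and rs="[]"]) (simp_all add: Hr_Suc eval_nat_numeral power_divide)

lemma Li_1_1: "norm z \<le> 0.0408 \<Longrightarrow> norm (mpolylog [1,1] z) \<le> norm z * 0.02204"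
  by (rule Li_gen[where m=1 and rs="[1]"]) (simp_all add: Hr_Suc eval_nat_numeral power_divide)

lemma Li_1_2: "norm z \<le> 0.0408 \<Longrightarrow> norm (mpolylog [1,2] z) \<le> norm z * 0.01126"
  by (rule Li_gen[where m=2 and rs="[1]"]) (simp_all add: Hr_Suc eval_nat_numeral power_divide)

lemma Li_2_1: "norm z \<le> 0.0408 \<Longrightarrow> norm (mpolylog [2,1] z) \<le> norm z * 0.02189"
  by (rule Li_gen[where m=1 and rs="[2]"]) (simp_all add: Hr_Suc eval_nat_numeral power_divide)

lemma Li_3_1: "norm z \<le> 0.0408 \<Longrightarrow> norm (mpolylog [3,1] z) \<le> norm z * 0.02182"
  by (rule Li_gen[where m=1 and rs="[3]"]) (simp_all add: Hr_Suc eval_nat_numeral power_divide)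

lemma Li_2_2: "norm z \<le> 0.0408 \<Longrightarrow> norm (mpolylog [2,2] z) \<le> norm z * 0.01121"
  by (rule Li_gen[where m=2 and rs="[2]"]) (simp_all add: Hr_Suc eval_nat_numeral power_divide)

lemma Li_1_3: "norm z \<le> 0.0408 \<Longrightarrow> norm (mpolylog [1,3] z) \<le> norm z * 0.00597"
  by (rule Li_gen[where m=3 and rs="[1]"]) (simp_all add: Hr_Suc eval_nat_numeral power_divide)

lemma Li_1_1_1: "norm z \<le> 0.0408 \<Longrightarrow> norm (mpolylog [1,1,1] z) \<le> norm z * 0.00107"
  by (rule Li_gen[where m=1 and rs="[1,1]"]) (simp_all add: Hr_Suc eval_nat_numeral power_divide)

lemma Li_2_1_1: "norm z \<le> 0.0408 \<Longrightarrow> norm (mpolylog [2,1,1] z) \<le> norm z * 0.00107"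
  by (rule Li_gen[where m=1 and rs="[1,2]"]) (simp_all add: Hr_Suc eval_nat_numeral power_divide)

lemma Li_1_2_1: "norm z \<le> 0.0408 \<Longrightarrow> norm (mpolylog [1,2,1] z) \<le> norm z * 0.00092"
  by (rule Li_gen[where m=1 and rs="[2,1]"]) (simp_all add: Hr_Suc eval_nat_numeral power_divide)

lemma Li_1_1_2: "norm z \<le> 0.0408 \<Longrightarrow> norm (mpolylog [1,1,2] z) \<le> norm z * 0.00087"
  by (rule Li_gen[where m=2 and rs="[1,1]"]) (simp_all add: Hr_Suc eval_nat_numeral power_divide)

lemma Li_1_1_1_1: "norm z \<le> 0.0408 \<Longrightarrow> norm (mpolylog [1,1,1,1] z) \<le> norm z * 0.00078"
  by (rule Li_gen[where m=1 and rs="[1,1,1]"]) (simp_all add: Hr_Suc eval_nat_numeral power_divide)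

lemma Li_gen1:
  assumes "rev ms = [m]" "m \<ge> 1" "norm z \<le> 0.0408"
    "1 / 2 ^ m * 0.0408 + 1 / 3 ^ m * 0.0408^2
            + 1 / 4 ^ m * 0.0408^3 + 243 * 0.0408^4 / (1 - 3 * 0.0408) \<le> B"
  shows "norm (mpolylog ms z - z) \<le> norm z * B"
proof -
  have "norm (mpolylog ms z - complex_of_real (Hr [] 1) * z) \<le> norm z * (Hr [] 2 / 2 ^ m * 0.0408 + Hr [] 3 / 3 ^ m * 0.0408^2
            + Hr [] 4 / 4 ^ m * 0.0408^3 + 243 * 0.0408^4 / (1 - 3 * 0.0408))"
    by (rule mpolylog_bound1[OF assms(1,2) _ assms(3)]) simp_all
  also have "\<dots> \<le> norm z * B" using assms(4) by (intro mult_left_mono) auto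
  finally show ?thesis by simp
qed

lemma Li_1_lin: "norm z \<le> 0.0408 \<Longrightarrow> norm (mpolylog [1] z - z) \<le> norm z * 0.02174"
  by (rule Li_gen1[where m=1]) (simp_all add: power_divide)

lemma Li_4_lin: "norm z \<le> 0.0408 \<Longrightarrow> norm (mpolylog [4] z - z) \<le> norm z * 0.00334"
  by (rule Li_gen1[where m=4]) (simp_all add: power_divide)


lemma zeta3_bounds: "0 \<le> zeta3" "zeta3 \<le> 1.65"
proof -
  have sq: "(\<lambda>n. 1 / (real (Suc n))^2) sums (pi^2/6)"
    using inverse_squares_sums by (simp add: add.commute)
  have le: "1 / (real (Suc n))^3 \<le> 1 / (real (Suc n))^2" for n
  proof -
    have "(real (Suc n))^2 \<le> (real (Suc n))^3" by (rule power_increasing) auto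
    then show ?thesis by (intro divide_left_mono) auto
  qed
  have s3: "summable (\<lambda>n. 1 / (real (Suc n))^3)"
    by (rule summable_comparison_test'[OF sums_summable[OF sq]]) (use le in simp)
  have "zeta3 \<le> pi^2/6" unfolding zeta3_def
    using suminf_le[OF le s3 sums_summable[OF sq]] sums_unique[OF sq] by simp
  also have "\<dots> \<le> 1.65"
  proof -
    have p: "pi \<le> 3.1416" using pi_approx by simp
    have "pi * pi \<le> 3.1416 * 3.1416" by (rule mult_mono[OF p p]) auto
    then show ?thesis by (simp add: power2_eq_square)
  qed
  finally show "zeta3 \<le> 1.65" .
  show "0 \<le> zeta3" unfolding zeta3_def by (rule suminf_nonneg[OF s3]) simp
qed

lemma coef_bounds:
  fixes x z :: real
  assumes x1: "4.4944 \<le> x" and x2: "x \<le> 5.8081" and z1: "0 \<le> z" and z2: "z \<le> 1.65"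
  shows "\<bar>x/2 - 2\<bar> \<le> 0.90405"
    and "\<bar>x^2/16 - x + 2\<bar> \<le> 1.7"
    and "\<bar>3*x - 12\<bar> \<le> 5.4243"
    and "\<bar>x - 4\<bar> \<le> 1.8081"
    and "\<bar>x^3/192 - x^2/8 - x/2 - 2 + 2*x*z\<bar> \<le> 13.42"
    and "\<bar>x^2/8 - 2*x + 4\<bar> \<le> 4"
    and "\<bar>x^2/4 - 4*x + 12\<bar> \<le> 4"
    and "\<bar>5*x^2/8 - 8*x + 28\<bar> \<le> 13.13"
    and "\<bar>2*x - 8\<bar> \<le> 3.6162"
    and "\<bar>6*x - 24\<bar> \<le> 10.8486"
    and "\<bar>14*x - 56\<bar> \<le> 25.3134"
proof -
  define D where "D = (8 - x) * (8 - x)"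
  have D1: "2.1919 * 2.1919 \<le> D" unfolding D_def by (rule mult_mono) (use x2 in auto)
  have D2: "D \<le> 3.5056 * 3.5056" unfolding D_def by (rule mult_mono) (use x1 x2 in auto)
  have X1: "4.4944 * 4.4944 \<le> x * x" by (rule mult_mono) (use x1 in auto)
  have X2: "x * x \<le> 5.8081 * 5.8081" by (rule mult_mono) (use x1 x2 in auto)
  have Y1: "0 \<le> x * x * x" using x1 by simp
  have Y2: "x * x * x \<le> 5.8081 * 5.8081 * 5.8081"
    by (rule mult_mono[OF X2 x2]) (use x1 in auto)
  have W1: "0 \<le> x * z" using x1 z1 by simp
  have W2: "x * z \<le> 5.8081 * 1.65" by (rule mult_mono) (use x1 x2 z1 z2 in auto)
  have e1: "x^2/16 - x + 2 = D/16 - 2" unfolding D_def by (simp add: power2_eq_square field_simps)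
  have e2: "x^2/8 - 2*x + 4 = D/8 - 4" unfolding D_def by (simp add: power2_eq_square field_simps)
  have e3: "x^2/4 - 4*x + 12 = D/4 - 4" unfolding D_def by (simp add: power2_eq_square field_simps)
  have sq: "x^2 = x * x" "x^3 = x * x * x" by (simp_all add: power2_eq_square power3_eq_cube)
  show "\<bar>x/2 - 2\<bar> \<le> 0.90405" using x1 x2 by (simp add: abs_le_iff)
  show "\<bar>x^2/16 - x + 2\<bar> \<le> 1.7" unfolding e1 using D1 D2 by (simp add: abs_le_iff)
  show "\<bar>3*x - 12\<bar> \<le> 5.4243" using x1 x2 by (simp add: abs_le_iff)
  show "\<bar>x - 4\<bar> \<le> 1.8081" using x1 x2 by (simp add: abs_le_iff)
  show "\<bar>x^3/192 - x^2/8 - x/2 - 2 + 2*x*z\<bar> \<le> 13.42"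
  proof -
    define P2 where "P2 = x * x"
    define P3 where "P3 = x * x * x"
    define W where "W = x * z"
    have e: "x^3/192 - x^2/8 - x/2 - 2 + 2*x*z = P3/192 - P2/8 - x/2 - 2 + 2*W"
      unfolding P2_def P3_def W_def by (simp add: power2_eq_square power3_eq_cube)
    have "4.4944 * 4.4944 \<le> P2" "P2 \<le> 5.8081 * 5.8081" "0 \<le> P3" "P3 \<le> 5.8081 * 5.8081 * 5.8081"
      "0 \<le> W" "W \<le> 5.8081 * 1.65"
      unfolding P2_def P3_def W_def using X1 X2 Y1 Y2 W1 W2 by auto
    then show ?thesis unfolding e abs_le_iff using x1 x2 by auto
  qed
  show "\<bar>x^2/8 - 2*x + 4\<bar> \<le> 4" unfolding e2 using D1 D2 by (simp add: abs_le_iff)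
  show "\<bar>x^2/4 - 4*x + 12\<bar> \<le> 4" unfolding e3 using D1 D2 by (simp add: abs_le_iff)
  show "\<bar>5*x^2/8 - 8*x + 28\<bar> \<le> 13.13" unfolding sq abs_le_iff using X1 X2 x1 x2 by auto
  show "\<bar>2*x - 8\<bar> \<le> 3.6162" using x1 x2 by (simp add: abs_le_iff)
  show "\<bar>6*x - 24\<bar> \<le> 10.8486" using x1 x2 by (simp add: abs_le_iff)
  show "\<bar>14*x - 56\<bar> \<le> 25.3134" using x1 x2 by (simp add: abs_le_iff)
qed


lemma norm_add_le2: "norm (a::complex) \<le> A \<Longrightarrow> norm b \<le> B \<Longrightarrow> norm (a + b) \<le> A + B"
  by (metis add_mono norm_triangle_ineq order_trans)

lemma tb: assumes "\<bar>c\<bar> \<le> M" "norm X \<le> nz * B" "0 \<le> B" "0 \<le> nz"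
  shows "norm (complex_of_real c * X) \<le> M * B * nz"
proof -
  have "norm (complex_of_real c * X) = \<bar>c\<bar> * norm X" by (simp add: norm_mult)
  also have "\<dots> \<le> M * (nz * B)" by (rule mult_mono) (use assms in auto)
  finally show ?thesis by (simp add: algebra_simps)
qed

lemma lamz: "4.4944 \<le> lam" "lam \<le> 5.8081" "0 \<le> zeta3" "zeta3 \<le> 1.65"
  using lam_bounds zeta3_bounds by auto

lemmas CB = coef_bounds[OF lamz]

lemma absc: "\<bar>c::real\<bar> \<le> \<bar>c\<bar>" by simp

lemma V1_bound: "norm z \<le> 0.0408 \<Longrightarrow> norm (V 1 z) \<le> norm z * 2.0435"
proof -
  assume z: "norm z \<le> 0.0408"
  have "V 1 z = complex_of_real 2 * mpolylog [1] z" by (simp add: V_def)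
  also have "norm \<dots> \<le> \<bar>2\<bar> * 1.02175 * norm z" by (rule tb[OF absc Li_1[OF z]]) simp_all
  finally show ?thesis by simp
qed

lemma V2_bound: "norm z \<le> 0.0408 \<Longrightarrow> norm (V 2 z) \<le> norm z * 1.0024"
proof -
  assume z: "norm z \<le> 0.0408"
  have "V 2 z = complex_of_real (lam/2 - 2) * mpolylog [2] z + complex_of_real 4 * mpolylog [1,1] z"
    by (simp add: V_def Let_def)
  also have "norm \<dots> \<le> 0.90405 * 1.01117 * norm z + \<bar>4\<bar> * 0.02204 * norm z"
  proof (rule norm_add_le2)
    show "norm (complex_of_real (lam/2 - 2) * mpolylog [2] z) \<le> 0.90405 * 1.01117 * norm z"
      by (rule tb[OF CB(1) Li_2[OF z]]) simp_all
    show "norm (complex_of_real 4 * mpolylog [1,1] z) \<le> \<bar>4\<bar> * 0.02204 * norm z"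
      by (rule tb[OF absc Li_1_1[OF z]]) simp_all
  qed
  also have "\<dots> \<le> norm z * 1.0024" by simp
  finally show ?thesis .
qed

lemma V3_bound: "norm z \<le> 0.0408 \<Longrightarrow> norm (V 3 z) \<le> norm z * 1.8194"
proof -
  assume z: "norm z \<le> 0.0408"
  have e: "V 3 z = complex_of_real (lam^2/16 - lam + 2) * mpolylog [3] z + complex_of_real (3*lam - 12) * mpolylog [1,2] z
     + complex_of_real (lam - 4) * mpolylog [2,1] z + complex_of_real 8 * mpolylog [1,1,1] z"
    by (simp add: V_def Let_def)
  have t1: "norm (complex_of_real (lam^2/16 - lam + 2) * mpolylog [3] z) \<le> 1.7 * 1.00595 * norm z"
    by (rule tb[OF CB(2) Li_3[OF z]]) simp_all
  have t2: "norm (complex_of_real (3*lam - 12) * mpolylog [1,2] z) \<le> 5.4243 * 0.01126 * norm z"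
    by (rule tb[OF CB(3) Li_1_2[OF z]]) simp_all
  have t3: "norm (complex_of_real (lam - 4) * mpolylog [2,1] z) \<le> 1.8081 * 0.02189 * norm z"
    by (rule tb[OF CB(4) Li_2_1[OF z]]) simp_all
  have t4: "norm (complex_of_real 8 * mpolylog [1,1,1] z) \<le> \<bar>8\<bar> * 0.00107 * norm z"
    by (rule tb[OF absc Li_1_1_1[OF z]]) simp_all
  have "norm (V 3 z) \<le> 1.7 * 1.00595 * norm z + 5.4243 * 0.01126 * norm z + 1.8081 * 0.02189 * norm z + \<bar>8\<bar> * 0.00107 * norm z"
    unfolding e by (rule norm_add_le2[OF norm_add_le2[OF norm_add_le2[OF t1 t2] t3] t4])
  also have "\<dots> \<le> norm z * 1.8194" by simp
  finally show ?thesis .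
qed

lemma regroup: "(a::complex) * X + b * Y = (a + b) * X + b * (Y - X)"
  by (simp add: algebra_simps)

lemma V4_bound: "norm z \<le> 0.0408 \<Longrightarrow> norm (V 4 z) \<le> norm z * 14.21"
proof -
  assume z: "norm z \<le> 0.0408"
  have d: "norm (mpolylog [1] z - mpolylog [4] z) \<le> norm z * 0.02508"
  proof -
    have "mpolylog [1] z - mpolylog [4] z = (mpolylog [1] z - z) - (mpolylog [4] z - z)" by simp
    then have "norm (mpolylog [1] z - mpolylog [4] z) \<le> norm (mpolylog [1] z - z) + norm (mpolylog [4] z - z)"
      by (simp only: norm_triangle_ineq4)
    then show ?thesis using Li_1_lin[OF z] Li_4_lin[OF z] by simp
  qed
  define e where "e = 2 * lam * zeta3"
  have e1: "\<bar>e\<bar> \<le> 19.17"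
  proof -
    have "lam * zeta3 \<le> 5.8081 * 1.65" by (rule mult_mono) (use lamz in auto)
    moreover have "0 \<le> lam * zeta3" using lamz by simp
    ultimately show ?thesis unfolding e_def by (simp add: abs_le_iff)
  qed
  have eq1: "V 4 z = (complex_of_real (lam^3/192 - lam^2/8 - lam/2 - 2) * mpolylog [4] z + complex_of_real e * mpolylog [1] z)
     + complex_of_real (lam^2/8 - 2*lam + 4) * mpolylog [3,1] z
     + complex_of_real (lam^2/4 - 4*lam + 12) * mpolylog [2,2] z
     + complex_of_real (5*lam^2/8 - 8*lam + 28) * mpolylog [1,3] z
     + complex_of_real (2*lam - 8) * mpolylog [2,1,1] z
     + complex_of_real (6*lam - 24) * mpolylog [1,2,1] z
     + complex_of_real (14*lam - 56) * mpolylog [1,1,2] z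
     + complex_of_real 16 * mpolylog [1,1,1,1] z"
    by (simp add: V_def Let_def e_def)
  have rg: "complex_of_real (lam^3/192 - lam^2/8 - lam/2 - 2) * mpolylog [4] z + complex_of_real e * mpolylog [1] z
      = complex_of_real (lam^3/192 - lam^2/8 - lam/2 - 2 + 2*lam*zeta3) * mpolylog [4] z + complex_of_real e * (mpolylog [1] z - mpolylog [4] z)"
    by (subst regroup) (simp add: e_def)
  have t1: "norm (complex_of_real (lam^3/192 - lam^2/8 - lam/2 - 2 + 2*lam*zeta3) * mpolylog [4] z) \<le> 13.42 * 1.00335 * norm z"
    by (rule tb[OF CB(5) Li_4[OF z]]) simp_all
  have t0: "norm (complex_of_real e * (mpolylog [1] z - mpolylog [4] z)) \<le> 19.17 * 0.02508 * norm z"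
    by (rule tb[OF e1 d]) simp_all
  have t2: "norm (complex_of_real (lam^2/8 - 2*lam + 4) * mpolylog [3,1] z) \<le> 4 * 0.02182 * norm z"
    by (rule tb[OF CB(6) Li_3_1[OF z]]) simp_all
  have t3: "norm (complex_of_real (lam^2/4 - 4*lam + 12) * mpolylog [2,2] z) \<le> 4 * 0.01121 * norm z"
    by (rule tb[OF CB(7) Li_2_2[OF z]]) simp_all
  have t4: "norm (complex_of_real (5*lam^2/8 - 8*lam + 28) * mpolylog [1,3] z) \<le> 13.13 * 0.00597 * norm z"
    by (rule tb[OF CB(8) Li_1_3[OF z]]) simp_all
  have t5: "norm (complex_of_real (2*lam - 8) * mpolylog [2,1,1] z) \<le> 3.6162 * 0.00107 * norm z"
    by (rule tb[OF CB(9) Li_2_1_1[OF z]]) simp_all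
  have t6: "norm (complex_of_real (6*lam - 24) * mpolylog [1,2,1] z) \<le> 10.8486 * 0.00092 * norm z"
    by (rule tb[OF CB(10) Li_1_2_1[OF z]]) simp_all
  have t7: "norm (complex_of_real (14*lam - 56) * mpolylog [1,1,2] z) \<le> 25.3134 * 0.00087 * norm z"
    by (rule tb[OF CB(11) Li_1_1_2[OF z]]) simp_all
  have t8: "norm (complex_of_real 16 * mpolylog [1,1,1,1] z) \<le> \<bar>16\<bar> * 0.00078 * norm z"
    by (rule tb[OF absc Li_1_1_1_1[OF z]]) simp_all
  have "norm (V 4 z) \<le> (13.42 * 1.00335 * norm z + 19.17 * 0.02508 * norm z) + 4 * 0.02182 * norm z
     + 4 * 0.01121 * norm z + 13.13 * 0.00597 * norm z + 3.6162 * 0.00107 * norm z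
     + 10.8486 * 0.00092 * norm z + 25.3134 * 0.00087 * norm z + \<bar>16\<bar> * 0.00078 * norm z"
    unfolding eq1 rg
    by (rule norm_add_le2[OF norm_add_le2[OF norm_add_le2[OF norm_add_le2[OF norm_add_le2[OF
          norm_add_le2[OF norm_add_le2[OF norm_add_le2[OF t1 t0] t2] t3] t4] t5] t6] t7] t8])
  also have "\<dots> \<le> norm z * 14.21" by simp
  finally show ?thesis .
qed


definition KK :: "nat \<Rightarrow> real" where
  "KK l = (if l = 1 then 2.0435 else if l = 2 then 1.0024 else if l = 3 then 1.8194 else 14.21)"

lemma V_bound: assumes "l \<in> {1,2,3,4}" "norm z \<le> 0.0408" shows "norm (V l z) \<le> norm z * KK l"
  using assms V1_bound V2_bound V3_bound V4_bound by (auto simp: KK_def)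

lemma KK_pos: "l \<in> {1,2,3,4} \<Longrightarrow> 0 \<le> KK l" by (auto simp: KK_def)

lemma pow64_r0': "(0.9512::real)^64 \<le> 0.0406818"
proof -
  have a2: "(0.9512::real)^2 \<le> 0.9047815" by (simp add: power2_eq_square)
  have a4: "(0.9512::real)^4 \<le> 0.8186296"
  proof -
    have "(0.9512::real)^4 = ((0.9512::real)^2)^2" by (simp flip: power_mult)
    also have "\<dots> \<le> 0.9047815^2" by (rule power_mono[OF a2]) simp
    also have "\<dots> \<le> 0.8186296" by (simp add: power2_eq_square)
    finally show ?thesis .
  qed
  have a8: "(0.9512::real)^8 \<le> 0.6701545"
  proof -
    have "(0.9512::real)^8 = ((0.9512::real)^4)^2" by (simp flip: power_mult)
    also have "\<dots> \<le> 0.8186296^2" by (rule power_mono[OF a4]) simp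
    also have "\<dots> \<le> 0.6701545" by (simp add: power2_eq_square)
    finally show ?thesis .
  qed
  have a16: "(0.9512::real)^16 \<le> 0.4491071"
  proof -
    have "(0.9512::real)^16 = ((0.9512::real)^8)^2" by (simp flip: power_mult)
    also have "\<dots> \<le> 0.6701545^2" by (rule power_mono[OF a8]) simp
    also have "\<dots> \<le> 0.4491071" by (simp add: power2_eq_square)
    finally show ?thesis .
  qed
  have a32: "(0.9512::real)^32 \<le> 0.2016972"
  proof -
    have "(0.9512::real)^32 = ((0.9512::real)^16)^2" by (simp flip: power_mult)
    also have "\<dots> \<le> 0.4491071^2" by (rule power_mono[OF a16]) simp
    also have "\<dots> \<le> 0.2016972" by (simp add: power2_eq_square)
    finally show ?thesis .
  qed
  have "(0.9512::real)^64 = ((0.9512::real)^32)^2" by (simp flip: power_mult)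
  also have "\<dots> \<le> 0.2016972^2" by (rule power_mono[OF a32]) simp
  also have "\<dots> \<le> 0.0406818" by (simp add: power2_eq_square)
  finally show ?thesis .
qed

lemma pow64_r0: "(0.9512::real)^64 \<le> 0.0408" using pow64_r0' by simp

lemma p6364: "(x::real)^64 = x^63 * x"
proof -
  have "x^64 = x^(Suc 63)" by simp
  also have "\<dots> = x^63 * x" by (rule power_Suc2)
  finally show ?thesis .
qed

lemma pow63_r0: "(0.9512::real)^63 \<le> 0.0428"
proof -
  have "(0.9512::real)^63 = (0.9512::real)^64 / 0.9512" unfolding p6364[of "0.9512"] by simp
  also have "\<dots> \<le> 0.0406818 / 0.9512" by (intro divide_right_mono pow64_r0') simp
  also have "\<dots> \<le> 0.0428" by simp
  finally show ?thesis .
qed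


lemma Qt_bound:
  assumes N: "N \<ge> 64" and l: "l \<in> {1,2,3,4}" and x: "norm x < 0.95" and x0: "x \<noteq> 0"
  shows "norm (Qt N l x) \<le> KK l * 1.00255 * norm (fN_inv N x) ^ (N - 1)"
    and "norm (fN_inv N x) \<le> 0.9512"
    and "0.99874 * norm (fN_inv N x) \<le> norm x"
proof -
  have N0: "N > 0" using N by simp
  have xin: "x \<in> fN N ` ball 0 1" by (rule fN_surj[OF N x])
  define w where "w = fN_inv N x"
  have wb: "w \<in> ball 0 1" unfolding w_def fN_inv_def by (rule inv_into_into[OF xin])
  have fw: "fN N w = x" unfolding w_def fN_inv_def by (rule f_inv_into_f[OF xin])
  have w0: "w \<noteq> 0" using fw x0 fN_zero[of N] by auto
  define r where "r = norm w"
  have r0: "0 < r" unfolding r_def using w0 by simp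
  have rl: "0.99874 * r \<le> norm x" unfolding r_def using fN_lower[OF N wb] fw by simp
  then show "0.99874 * norm (fN_inv N x) \<le> norm x" unfolding r_def w_def .
  have r1: "r \<le> 0.9512" using rl x by simp
  then show "norm (fN_inv N x) \<le> 0.9512" unfolding r_def w_def .
  define z where "z = w ^ N"
  have nz: "norm z = r ^ N" unfolding z_def r_def by (simp add: norm_power)
  have rN: "r ^ N \<le> 0.0408"
  proof -
    have "r ^ N \<le> r ^ 64" by (rule power_decreasing[OF N]) (use r0 r1 in auto)
    also have "\<dots> \<le> 0.9512 ^ 64" by (rule power_mono[OF r1]) (use r0 in simp)
    also have "\<dots> \<le> 0.0408" by (rule pow64_r0)
    finally show ?thesis .
  qed
  have Vb: "norm (V l z) \<le> r ^ N * KK l" using V_bound[OF l, of z] nz rN by simp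
  define a where "a = 2 / real N"
  have a0: "0 \<le> a" and a1: "a \<le> 1/32" unfolding a_def using a_bounds[OF N] by auto
  have z1: "norm z < 1" using nz rN by simp
  have Gl: "exp (- a * norm z) \<le> norm (Gf N w)"
    unfolding Gf_P a_def[symmetric] z_def[symmetric] by (rule P_norm_lower[OF a0 z1])
  have Gpos: "0 < norm (Gf N w)" using Gl by (smt (verit) exp_gt_zero)
  have inv: "1 / norm (Gf N w) \<le> 1.00255"
  proof -
    define y where "y = a * norm z"
    have y0: "0 \<le> y" unfolding y_def using a0 by simp
    have y1: "y \<le> 1/32 * 0.0408" unfolding y_def using a0 a1 nz rN r0 by (intro mult_mono) auto
    have "1 / norm (Gf N w) \<le> 1 / exp (- y)"
      using Gl Gpos unfolding y_def by (intro divide_left_mono) auto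
    also have "\<dots> = exp y" by (simp add: exp_minus field_simps)
    also have "\<dots> \<le> 1 + 2 * y" by (rule real_exp_bound_lemma[OF y0]) (use y1 in simp)
    also have "\<dots> \<le> 1.00255" using y1 by simp
    finally show ?thesis .
  qed
  have cpos: "0 < cN N" using cN_lower[OF N] by simp
  have "Qt N l x = V l z * complex_of_real (cN N) / (complex_of_real (cN N) * Gf N w * w)"
    unfolding Qt_def Let_def w_def[symmetric] z_def[symmetric] deriv_fN[OF N0 wb] ..
  also have "\<dots> = V l z / (Gf N w * w)" using cpos by (simp add: field_simps)
  finally have Qe: "norm (Qt N l x) = norm (V l z) / (norm (Gf N w) * r)"
    unfolding r_def by (simp add: norm_divide norm_mult)
  have "norm (V l z) / (norm (Gf N w) * r) = (norm (V l z) / r) * (1 / norm (Gf N w))" by simp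
  also have "\<dots> \<le> (r ^ (N - 1) * KK l) * 1.00255"
  proof (rule mult_mono)
    have "r ^ N = r ^ (N - 1) * r" using N0 by (metis Suc_diff_1 power_Suc2)
    then show "norm (V l z) / r \<le> r ^ (N - 1) * KK l" using Vb r0 by (simp add: divide_le_eq algebra_simps)
    show "1 / norm (Gf N w) \<le> 1.00255" by (rule inv)
  qed (use r0 KK_pos[OF l] Gpos in auto)
  finally show "norm (Qt N l x) \<le> KK l * 1.00255 * norm (fN_inv N x) ^ (N - 1)"
    unfolding Qe r_def w_def by (simp add: algebra_simps)
qed


theorem lemma2p16:
  fixes N l :: nat
  assumes "N \<ge> 64" and "l \<in> {1,2,3,4}"
  shows "(\<forall>x\<in>ball (0::complex) 0.95 - {0}. norm (Qt N l x) \<le> CV l)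
       \<and> (\<exists>L. (Qt N l \<longlongrightarrow> L) (at 0) \<and> norm L \<le> CV l)"
proof
  note N = assms(1) and l = assms(2)
  have K0: "0 \<le> KK l" by (rule KK_pos[OF l])
  show "\<forall>x\<in>ball (0::complex) 0.95 - {0}. norm (Qt N l x) \<le> CV l"
  proof
    fix x :: complex assume "x \<in> ball 0 0.95 - {0}"
    then have x: "norm x < 0.95" and x0: "x \<noteq> 0" by auto
    note QB = Qt_bound[OF N l x x0]
    define r where "r = norm (fN_inv N x)"
    have r1: "r \<le> 0.9512" using QB(2) unfolding r_def .
    have "r ^ (N - 1) \<le> 0.9512 ^ (N - 1)" by (rule power_mono[OF r1]) (simp add: r_def)
    also have "\<dots> \<le> 0.9512 ^ 63" by (rule power_decreasing) (use N in auto)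
    also have "\<dots> \<le> 0.0428" by (rule pow63_r0)
    finally have rp: "r ^ (N - 1) \<le> 0.0428" .
    have "norm (Qt N l x) \<le> KK l * 1.00255 * r ^ (N - 1)" using QB(1) unfolding r_def .
    also have "\<dots> \<le> KK l * 1.00255 * 0.0428" using rp K0 by (intro mult_left_mono) auto
    also have "\<dots> \<le> CV l" using l by (auto simp: KK_def CV_def)
    finally show "norm (Qt N l x) \<le> CV l" .
  qed
  show "\<exists>L. (Qt N l \<longlongrightarrow> L) (at 0) \<and> norm L \<le> CV l"
  proof (intro exI conjI)
    show "norm (0::complex) \<le> CV l" by (simp add: CV_def)
    have ev: "eventually (\<lambda>x. norm (Qt N l x) \<le> 15 * norm x) (at (0::complex))"
      unfolding eventually_at
    proof (intro exI[of _ "0.95"] conjI allI ballI impI)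
      fix x :: complex assume "x \<noteq> 0 \<and> dist x 0 < 0.95"
      then have x: "norm x < 0.95" and x0: "x \<noteq> 0" by auto
      note QB = Qt_bound[OF N l x x0]
      define r where "r = norm (fN_inv N x)"
      have r1: "r \<le> 0.9512" using QB(2) unfolding r_def .
      have r0: "0 \<le> r" unfolding r_def by simp
      have "r ^ (N - 1) \<le> r ^ 1" by (rule power_decreasing) (use N r0 r1 in auto)
      also have "\<dots> \<le> norm x / 0.99874" using QB(3) unfolding r_def by simp
      finally have rp: "r ^ (N - 1) \<le> norm x / 0.99874" .
      have "norm (Qt N l x) \<le> KK l * 1.00255 * r ^ (N - 1)" using QB(1) unfolding r_def .
      also have "\<dots> \<le> KK l * 1.00255 * (norm x / 0.99874)" using rp K0 by (intro mult_left_mono) auto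
      also have "\<dots> \<le> 15 * norm x"
      proof -
        have "KK l * 1.00255 / 0.99874 \<le> 15" using l by (auto simp: KK_def)
        then have "KK l * 1.00255 / 0.99874 * norm x \<le> 15 * norm x" by (intro mult_right_mono) auto
        then show ?thesis by simp
      qed
      finally show "norm (Qt N l x) \<le> 15 * norm x" .
    qed simp
    have "((\<lambda>x::complex. 15 * norm x) \<longlongrightarrow> 15 * norm (0::complex)) (at 0)"
      by (intro tendsto_intros)
    then have "((\<lambda>x::complex. 15 * norm x) \<longlongrightarrow> 0) (at 0)" by simp
    then show "(Qt N l \<longlongrightarrow> 0) (at 0)" by (rule Lim_null_comparison[OF ev])
  qed
qed


end
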